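(* Consider a hybrid plant $\mathcal H=(C,f,D,g)$, data $(\mathcal T,L_C,L_D,V,X)$ defining the optimal control problem below, and a closed set $\mathcal A\subset\mathbb R^n$. Suppose one of the following holds: (i) there exist a function $\widetilde V:\mathbb R^n\to\mathbb R_{\ge0}$, continuously differentiable on an open set containing $\operatorname{cl}(\Pi(C))$, class-$\mathcal K$ functions $\widetilde\alpha_1,\widetilde\alpha_2$, and constants $\lambda\in\mathbb R$, $\varepsilon>0$ such that $\widetilde\alpha_1(|x|_{\mathcal A})\le\widetilde V(x)\le\widetilde\alpha_2(|x|_{\mathcal A})$ for all $x\in\Pi(C)$ with $|x|_{\mathcal A}\le\varepsilon$, and $\langle\nabla\widetilde V(x),f(x,u)\rangle\ge\lambda\widetilde V(x)$ for all $(x,u)\in C$ with $|x|_{\mathcal A}\le\varepsilon$; (ii) there exist a continuous function $\sigma:(0,\infty)\to[0,\infty)$ and $\varepsilon>0$ such that $|f(x,u)|\le\sigma(|x|_{\mathcal A})$ for all $(x,u)\in C$ with $0<|x|_{\mathcal A}\le\varepsilon$. Then there exists a class-$\mathcal K$ function $\alpha$ such that every feasible solution pair $(x,u)$ satisfies (P2), (P3) or (P4) with this $\alpha$.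
   Context: Notation: $|\cdot|$ is the Euclidean norm, $|x|_{\mathcal A}=\inf_{a\in\mathcal A}|x-a|$, $\Pi(x,u)=x$. A class-$\mathcal K$ function is a continuous strictly increasing $\alpha:\mathbb R_{\ge0}\to\mathbb R_{\ge0}$ with $\alpha(0)=0$. A hybrid plant $\mathcal H=(C,f,D,g)$ consists of a closed flow set $C\subset\mathbb R^n\times\mathbb R^m$, a flow map $f:C\to\mathbb R^n$, a jump set $D\subset\mathbb R^n\times\mathbb R^m$ and a jump map $g:D\to\mathbb R^n$, with dynamics $\dot x=f(x,u)$ for $(x,u)\in C$ and $x^+=g(x,u)$ for $(x,u)\in D$. A set $E\subset\mathbb R_{\ge0}\times\mathbb N$ is a compact hybrid time domain if $E=\bigcup_{j=0}^{J}([t_j,t_{j+1}]\times\{j\})$ for some $J\in\mathbb N$ and $0=t_0\le t_1\le\dots\le t_{J+1}$; $E$ is a hybrid time domain if it is the union of a nondecreasing sequence of compact hybrid time domains. A pair $(x,u)$ with common hybrid time domain $\operatorname{dom}(x,u)$ is a solution pair to $\mathcal H$ if: (S0) $(x(0,0),u(0,0))\in C\cup D$; (S1) for each $j$ such that $I^j:=\{t:(t,j)\in\operatorname{dom}(x,u)\}$ has nonempty interior, $t\mapsto x(t,j)$ is locally absolutely continuous, $t\mapsto u(t,j)$ is Lebesgue measurable and locally essentially bounded on $\operatorname{int}I^j$, and for almost all $t\in I^j$, $(x(t,j),u(t,j))\in C$ and $\dot x(t,j)=f(x(t,j),u(t,j))$; (S2) for each $(t,j)\in\operatorname{dom}(x,u)$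 with $(t,j+1)\in\operatorname{dom}(x,u)$, $(x(t,j),u(t,j))\in D$ and $x(t,j+1)=g(x(t,j),u(t,j))$. $\widehat{\mathcal S}_{\mathcal H}(x_\circ)$ denotes the set of solution pairs with $x(0,0)=x_\circ$. $(T,J)\in\operatorname{dom}(x,u)$ is the terminal time if $T\ge t$ and $J\ge j$ for all $(t,j)\in\operatorname{dom}(x,u)$. A hybrid prediction horizon is a set $\mathcal T=\bigcup_{j=0}^{J}([t_{j+1},t_j]\times\{j\})$ for some finite nonincreasing sequence $\{t_j\}_{j=0}^{J+1}$ with $t_0>0$, $J\ge0$, $t_{J+1}=0$. The data $(\mathcal T,L_C,L_D,V,X)$ consists of a hybrid prediction horizon $\mathcal T$, a terminal constraint set $X\subset\Pi(C\cup D)$, and costs $L_C:C\to\mathbb R_{\ge0}$, $L_D:D\to\mathbb R_{\ge0}$, $V:X\to\mathbb R_{\ge0}$. A solution pair $(x,u)\in\widehat{\mathcal S}_{\mathcal H}(x_\circ)$ is feasible (from $x_\circ$) if it has compact domain with terminal time $(T,J)\in\mathcal T$ and $x(T,J)\in X$. Conditions on a solution pair $(x,u)$ with compact domain and terminal time $(T,J)$, for a function $\alpha$: (P2) there exist $(t,j),(t',j')\in\operatorname{dom}(x,u)$ with $t+j\le t'+j'$, $t'-t\ge\alpha(|x(0,0)|_{\mathcal A})$, and $|x(s,i)|_{\mathcal A}\ge\alpha(|x(0,0)|_{\mathcal A})$ for all $(s,i)\in\operatorname{dom}(x,u)$ with $t+j\le s+i\le t'+j'$; (P3) $|x(t,j)|_{\mathcal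 A}\ge\alpha(|x(0,0)|_{\mathcal A})$ for some $(t,j)\in\operatorname{dom}(x,u)$ with $(t,j+1)\in\operatorname{dom}(x,u)$; (P4) $|x(T,J)|_{\mathcal A}\ge\alpha(|x(0,0)|_{\mathcal A})$. *)

theory Defs
  imports "HOL-Analysis.Analysis"
begin

definition classK :: "(real \<Rightarrow> real) \<Rightarrow> bool" where
  "classK \<alpha> \<longleftrightarrow> continuous_on {0..} \<alpha> \<and> strict_mono_on {0..} \<alpha> \<and> \<alpha> 0 = 0
     \<and> (\<forall>s\<ge>0. \<alpha> s \<ge> 0)"

definition compact_htd :: "(real \<times> nat) set \<Rightarrow> bool" where
  "compact_htd E \<longleftrightarrow> (\<exists>(J::nat) (t::nat \<Rightarrow> real). t 0 = 0 \<and> (\<forall>j\<le>J. t j \<le> t (Suc j))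
      \<and> E = (\<Union>j\<le>J. {t j..t (Suc j)} \<times> {j}))"

definition htd :: "(real \<times> nat) set \<Rightarrow> bool" where
  "htd E \<longleftrightarrow> (\<exists>Ek :: nat \<Rightarrow> (real \<times> nat) set. (\<forall>k. compact_htd (Ek k)) \<and> incseq Ek
      \<and> E = (\<Union>k. Ek k))"

definition abs_continuous_on :: "real \<Rightarrow> real \<Rightarrow> (real \<Rightarrow> 'a::real_normed_vector) \<Rightarrow> bool" where
  "abs_continuous_on a b \<phi> \<longleftrightarrow>
    (\<forall>\<epsilon>>0. \<exists>\<delta>>0. \<forall>(N::nat) (s::nat \<Rightarrow> real) (r::nat \<Rightarrow> real).
        (\<forall>k<N. a \<le> s k \<and> s k \<le> r k \<and> r k \<le> b) \<and> (\<forall>k. Suc k < N \<longrightarrow> r k \<le> s (Suc k))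
        \<and> (\<Sum>k<N. r k - s k) < \<delta> \<longrightarrow> (\<Sum>k<N. norm (\<phi> (r k) - \<phi> (s k))) < \<epsilon>)"

definition loc_abs_continuous_on :: "real set \<Rightarrow> (real \<Rightarrow> 'a::real_normed_vector) \<Rightarrow> bool" where
  "loc_abs_continuous_on I \<phi> \<longleftrightarrow> (\<forall>a b. a \<le> b \<and> {a..b} \<subseteq> I \<longrightarrow> abs_continuous_on a b \<phi>)"

definition loc_ess_bounded_on :: "real set \<Rightarrow> (real \<Rightarrow> 'a::real_normed_vector) \<Rightarrow> bool" where
  "loc_ess_bounded_on S \<phi> \<longleftrightarrow>
    (\<forall>K. compact K \<and> K \<subseteq> S \<longrightarrow> (\<exists>B. AE t in lebesgue. t \<in> K \<longrightarrow> norm (\<phi> t) \<le> B))"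

definition Ij :: "(real \<times> nat) set \<Rightarrow> nat \<Rightarrow> real set" where
  "Ij E j = {t. (t, j) \<in> E}"

definition solution_pair ::
  "('a::euclidean_space \<times> 'b::euclidean_space) set \<Rightarrow> ('a \<times> 'b \<Rightarrow> 'a) \<Rightarrow>
   ('a \<times> 'b) set \<Rightarrow> ('a \<times> 'b \<Rightarrow> 'a) \<Rightarrow>
   (real \<times> nat) set \<Rightarrow> (real \<times> nat \<Rightarrow> 'a) \<Rightarrow> (real \<times> nat \<Rightarrow> 'b) \<Rightarrow> bool" where
  "solution_pair C f D g E x u \<longleftrightarrow>
     htd E
   \<and> (x (0,0), u (0,0)) \<in> C \<union> D
   \<and> (\<forall>j. interior (Ij E j) \<noteq> {} \<longrightarrow>
         loc_abs_continuous_on (Ij E j) (\<lambda>t. x (t, j))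
       \<and> (\<lambda>t. u (t, j)) \<in> borel_measurable (lebesgue_on (interior (Ij E j)))
       \<and> loc_ess_bounded_on (interior (Ij E j)) (\<lambda>t. u (t, j))
       \<and> (AE t in lebesgue. t \<in> Ij E j \<longrightarrow>
            (x (t, j), u (t, j)) \<in> C \<and>
            ((\<lambda>s. x (s, j)) has_vector_derivative f (x (t, j), u (t, j))) (at t)))
   \<and> (\<forall>t j. (t, j) \<in> E \<and> (t, Suc j) \<in> E \<longrightarrow>
         (x (t, j), u (t, j)) \<in> D \<and> x (t, Suc j) = g (x (t, j), u (t, j)))"

definition terminal_time :: "(real \<times> nat) set \<Rightarrow> real \<Rightarrow> nat \<Rightarrow> bool" where
  "terminal_time E T J \<longleftrightarrow> (T, J) \<in> E \<and> (\<forall>(t, j) \<in> E. t \<le> T \<and> j \<le> J)"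

definition hybrid_prediction_horizon :: "(real \<times> nat) set \<Rightarrow> bool" where
  "hybrid_prediction_horizon \<T> \<longleftrightarrow> (\<exists>(J::nat) (t::nat \<Rightarrow> real). t 0 > 0
      \<and> (\<forall>j\<le>J. t (Suc j) \<le> t j) \<and> t (Suc J) = 0
      \<and> \<T> = (\<Union>j\<le>J. {t (Suc j)..t j} \<times> {j}))"

definition feasible ::
  "('a::euclidean_space \<times> 'b::euclidean_space) set \<Rightarrow> ('a \<times> 'b \<Rightarrow> 'a) \<Rightarrow>
   ('a \<times> 'b) set \<Rightarrow> ('a \<times> 'b \<Rightarrow> 'a) \<Rightarrow> (real \<times> nat) set \<Rightarrow> 'a set \<Rightarrow>
   (real \<times> nat) set \<Rightarrow> (real \<times> nat \<Rightarrow> 'a) \<Rightarrow> (real \<times> nat \<Rightarrow> 'b) \<Rightarrow> bool" where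
  "feasible C f D g \<T> X E x u \<longleftrightarrow> solution_pair C f D g E x u \<and> compact_htd E
     \<and> (\<exists>T J. terminal_time E T J \<and> (T, J) \<in> \<T> \<and> x (T, J) \<in> X)"

definition P2 :: "'a::euclidean_space set \<Rightarrow> (real \<Rightarrow> real) \<Rightarrow> (real \<times> nat) set \<Rightarrow> (real \<times> nat \<Rightarrow> 'a) \<Rightarrow> bool" where
  "P2 A \<alpha> E x \<longleftrightarrow> (\<exists>t j t' j'. (t, j) \<in> E \<and> (t', j') \<in> E \<and> t + real j \<le> t' + real j'
      \<and> t' - t \<ge> \<alpha> (infdist (x (0,0)) A)
      \<and> (\<forall>s i. (s, i) \<in> E \<and> t + real j \<le> s + real i \<and> s + real i \<le> t' + real j' \<longrightarrow>
              infdist (x (s, i)) A \<ge> \<alpha> (infdist (x (0,0)) A)))"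

definition P3 :: "'a::euclidean_space set \<Rightarrow> (real \<Rightarrow> real) \<Rightarrow> (real \<times> nat) set \<Rightarrow> (real \<times> nat \<Rightarrow> 'a) \<Rightarrow> bool" where
  "P3 A \<alpha> E x \<longleftrightarrow> (\<exists>t j. (t, j) \<in> E \<and> (t, Suc j) \<in> E \<and> infdist (x (t, j)) A \<ge> \<alpha> (infdist (x (0,0)) A))"

definition P4 :: "'a::euclidean_space set \<Rightarrow> (real \<Rightarrow> real) \<Rightarrow> (real \<times> nat) set \<Rightarrow> (real \<times> nat \<Rightarrow> 'a) \<Rightarrow> bool" where
  "P4 A \<alpha> E x \<longleftrightarrow> (\<forall>T J. terminal_time E T J \<longrightarrow> infdist (x (T, J)) A \<ge> \<alpha> (infdist (x (0,0)) A))"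

end

theory Submission
  imports Defs
begin

definition nonoverl :: "(real \<times> real) set \<Rightarrow> bool" where
  "nonoverl Q \<longleftrightarrow> (\<forall>p\<in>Q. \<forall>q\<in>Q. p \<noteq> q \<longrightarrow> snd p \<le> fst q \<or> snd q \<le> fst p)"

lemma sort_intervals:
  fixes Q :: "(real \<times> real) set"
  assumes "finite Q" "\<forall>q\<in>Q. fst q < snd q" "nonoverl Q"
  shows "\<exists>s r. bij_betw (\<lambda>k. (s k, r k)) {..<card Q} Q \<and> (\<forall>k. Suc k < card Q \<longrightarrow> r k \<le> s (Suc k))"
  using assms
proof (induction Q rule: finite_ranking_induct[where f = fst])
  case empty
  then show ?case by (auto simp: bij_betw_def)
next
  case (insert x S)
  show ?case
  proof (cases "x \<in> S")
    case True
    then show ?thesis using insert by (simp add: insert_absorb)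
  next
    case False
    have "nonoverl S" using insert.prems(2) unfolding nonoverl_def by auto
    then obtain s r where bij: "bij_betw (\<lambda>k. (s k, r k)) {..<card S} S"
      and ord: "\<forall>k. Suc k < card S \<longrightarrow> r k \<le> s (Suc k)"
      using insert.IH[OF _ \<open>nonoverl S\<close>] insert.prems(1) by auto
    define n where "n = card S"
    have cn: "card (insert x S) = Suc n" using False insert.hyps(1) n_def by simp
    define s' where "s' = s(n := fst x)"
    define r' where "r' = r(n := snd x)"
    have img: "(\<lambda>k. (s k, r k)) ` {..<n} = S" using bij n_def by (simp add: bij_betw_def)
    have inj: "inj_on (\<lambda>k. (s k, r k)) {..<n}" using bij n_def by (simp add: bij_betw_def)
    have eqo: "\<And>k. k < n \<Longrightarrow> (s' k, r' k) = (s k, r k)" by (simp add: s'_def r'_def)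
    have "bij_betw (\<lambda>k. (s' k, r' k)) {..<Suc n} (insert x S)"
      unfolding bij_betw_def
    proof
      show "inj_on (\<lambda>k. (s' k, r' k)) {..<Suc n}"
      proof (rule inj_onI)
        fix i j assume i: "i \<in> {..<Suc n}" and j: "j \<in> {..<Suc n}" and e: "(s' i, r' i) = (s' j, r' j)"
        show "i = j"
        proof (cases "i = n"; cases "j = n")
          assume "i = n" "j \<noteq> n"
          then have "j < n" using j by auto
          then have "(s j, r j) \<in> S" using img by auto
          moreover have "(s' j, r' j) = x" using e \<open>i = n\<close> by (simp add: s'_def r'_def)
          ultimately show ?thesis using False eqo[OF \<open>j < n\<close>] by simp
        next
          assume "i \<noteq> n" "j = n"
          then have "i < n" using i by auto
          then have "(s i, r i) \<in> S" using img by auto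
          moreover have "(s' i, r' i) = x" using e \<open>j = n\<close> by (simp add: s'_def r'_def)
          ultimately show ?thesis using False eqo[OF \<open>i < n\<close>] by simp
        next
          assume "i \<noteq> n" "j \<noteq> n"
          then have "i < n" "j < n" using i j by auto
          then show ?thesis using inj e eqo[of i] eqo[of j] unfolding inj_on_def by auto
        qed simp
      qed
      show "(\<lambda>k. (s' k, r' k)) ` {..<Suc n} = insert x S"
      proof -
        have "{..<Suc n} = insert n {..<n}" by auto
        then have "(\<lambda>k. (s' k, r' k)) ` {..<Suc n} = insert (s' n, r' n) ((\<lambda>k. (s' k, r' k)) ` {..<n})" by simp
        also have "(\<lambda>k. (s' k, r' k)) ` {..<n} = (\<lambda>k. (s k, r k)) ` {..<n}"
          using eqo by (intro image_cong) auto
        finally show ?thesis using img by (simp add: s'_def r'_def)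
      qed
    qed
    moreover have "\<forall>k. Suc k < Suc n \<longrightarrow> r' k \<le> s' (Suc k)"
    proof (intro allI impI)
      fix k assume k: "Suc k < Suc n"
      show "r' k \<le> s' (Suc k)"
      proof (cases "Suc k < n")
        case True
        then show ?thesis using ord n_def by (simp add: s'_def r'_def)
      next
        case False
        then have kn: "Suc k = n" using k by simp
        then have "k < n" by simp
        then have mem: "(s k, r k) \<in> S" using img by auto
        then have ne: "(s k, r k) \<noteq> x" using \<open>x \<notin> S\<close> by auto
        have "r k \<le> fst x \<or> snd x \<le> s k"
          using insert.prems(2) mem ne unfolding nonoverl_def by (metis insertCI fst_conv snd_conv)
        moreover have "s k \<le> fst x" using insert.hyps(2)[OF mem] by simp
        moreover have "fst x < snd x" using insert.prems(1) by simp
        ultimately have "r k \<le> fst x" by linarith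
        then show ?thesis using kn \<open>k < n\<close> by (simp add: s'_def r'_def)
      qed
    qed
    ultimately show ?thesis using cn by metis
  qed
qed

lemma ac_setD:
  fixes \<phi> :: "real \<Rightarrow> 'a::real_normed_vector"
  assumes "abs_continuous_on a b \<phi>" "e > 0"
  obtains \<delta> where "\<delta> > 0"
    "\<And>Q. finite Q \<Longrightarrow> \<forall>q\<in>Q. a \<le> fst q \<and> fst q < snd q \<and> snd q \<le> b \<Longrightarrow> nonoverl Q \<Longrightarrow>
       (\<Sum>q\<in>Q. snd q - fst q) < \<delta> \<Longrightarrow> (\<Sum>q\<in>Q. norm (\<phi> (snd q) - \<phi> (fst q))) < e"
proof -
  obtain \<delta> where d: "\<delta> > 0" and H: "\<And>N s r. (\<forall>k<N. a \<le> s k \<and> s k \<le> r k \<and> r k \<le> b) \<and> (\<forall>k. Suc k < N \<longrightarrow> r k \<le> s (Suc k))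
        \<and> (\<Sum>k<N. r k - s k) < \<delta> \<Longrightarrow> (\<Sum>k<N. norm (\<phi> (r k) - \<phi> (s k))) < e"
  proof -
    from assms(1)[unfolded abs_continuous_on_def, rule_format, OF assms(2)]
    obtain \<delta> where "\<delta> > 0" and "\<forall>N s r. (\<forall>k<N. a \<le> s k \<and> s k \<le> r k \<and> r k \<le> b) \<and> (\<forall>k. Suc k < N \<longrightarrow> r k \<le> s (Suc k))
        \<and> (\<Sum>k<N. r k - s k) < \<delta> \<longrightarrow> (\<Sum>k<N. norm (\<phi> (r k) - \<phi> (s k))) < e" by auto
    then show ?thesis using that by auto
  qed
  show ?thesis
  proof (rule that[OF d])
    fix Q assume fQ: "finite Q" and Qi: "\<forall>q\<in>Q. a \<le> fst q \<and> fst q < snd q \<and> snd q \<le> b"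
      and no: "nonoverl Q" and sm: "(\<Sum>q\<in>Q. snd q - fst q) < \<delta>"
    obtain s r where bij: "bij_betw (\<lambda>k. (s k, r k)) {..<card Q} Q"
      and ord: "\<forall>k. Suc k < card Q \<longrightarrow> r k \<le> s (Suc k)"
      using sort_intervals[OF fQ _ no] Qi by auto
    have s1: "(\<Sum>k<card Q. r k - s k) = (\<Sum>q\<in>Q. snd q - fst q)"
      using sum.reindex_bij_betw[OF bij, of "\<lambda>q. snd q - fst q"] by simp
    have s2: "(\<Sum>k<card Q. norm (\<phi> (r k) - \<phi> (s k))) = (\<Sum>q\<in>Q. norm (\<phi> (snd q) - \<phi> (fst q)))"
      using sum.reindex_bij_betw[OF bij, of "\<lambda>q. norm (\<phi> (snd q) - \<phi> (fst q))"] by simp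
    have mem: "\<And>k. k < card Q \<Longrightarrow> (s k, r k) \<in> Q" using bij by (auto simp: bij_betw_def)
    have "(\<Sum>k<card Q. norm (\<phi> (r k) - \<phi> (s k))) < e"
    proof (rule H, intro conjI allI impI)
      fix k assume "k < card Q"
      then have "(s k, r k) \<in> Q" by (rule mem)
      then show "a \<le> s k" "s k \<le> r k" "r k \<le> b" using Qi by force+
    next
      show "\<And>k. Suc k < card Q \<Longrightarrow> r k \<le> s (Suc k)" using ord by blast
      show "(\<Sum>k<card Q. r k - s k) < \<delta>" using sm s1 by simp
    qed
    then show "(\<Sum>q\<in>Q. norm (\<phi> (snd q) - \<phi> (fst q))) < e" using s2 by simp
  qed
qed

lemma ac_mono_core:
  fixes \<phi> :: "real \<Rightarrow> real"
  assumes ab: "a \<le> b" and ac: "abs_continuous_on a b \<phi>"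
    and N: "N \<in> null_sets lebesgue"
    and der: "\<And>t. t \<in> {a<..<b} \<Longrightarrow> t \<notin> N \<Longrightarrow> \<exists>D\<ge>0. (\<phi> has_real_derivative D) (at t)"
  shows "\<phi> a \<le> \<phi> b"
proof -
  have key: "\<phi> a \<le> \<phi> b + e * (b - a) + e" if e: "e > 0" for e
  proof -
    obtain \<delta> where \<delta>: "\<delta> > 0" and acQ: "\<And>Q. finite Q \<Longrightarrow> \<forall>q\<in>Q. a \<le> fst q \<and> fst q < snd q \<and> snd q \<le> b \<Longrightarrow> nonoverl Q \<Longrightarrow>
       (\<Sum>q\<in>Q. snd q - fst q) < \<delta> \<Longrightarrow> (\<Sum>q\<in>Q. norm (\<phi> (snd q) - \<phi> (fst q))) < e"
      using ac_setD[OF ac e] by blast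
    define N' where "N' = N \<union> {a,b}"
    have "negligible N" using N negligible_iff_null_sets by blast
    then have "negligible N'" unfolding N'_def by (simp add: negligible_Un negligible_finite)
    then have N'null: "N' \<in> null_sets lebesgue" using negligible_iff_null_sets by blast
    obtain Op where Op: "open Op" "N' \<subseteq> Op" "(Op - N') \<in> lmeasurable" "emeasure lebesgue (Op - N') < ennreal \<delta>"
      using sets_lebesgue_outer_open[of N' \<delta>] N'null \<delta> by blast
    have Opeq: "Op = (Op - N') \<union> N'" using Op(2) by blast
    have Opfm: "Op \<in> lmeasurable"
      using Op(3) fmeasurableI_null_sets[OF N'null] Opeq by (metis fmeasurable.Un)
    have "measure lebesgue Op = measure lebesgue (Op - N')"
      using measure_Un_null_set[of "Op - N'" lebesgue N'] Op(3) N'null Opeq by (metis fmeasurable_def mem_Collect_eq)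
    moreover have "measure lebesgue (Op - N') < \<delta>"
      using Op(4) emeasure_eq_measure2[OF Op(3)] \<delta> by (simp add: ennreal_less_iff)
    ultimately have mO: "measure lebesgue Op < \<delta>" by simp
    have "\<forall>t. \<exists>r>0. (t \<in> N' \<longrightarrow> ball t r \<subseteq> Op) \<and>
      (t \<notin> N' \<and> t \<in> {a<..<b} \<longrightarrow> (\<forall>y. \<bar>y - t\<bar> < r \<longrightarrow>
          (t \<le> y \<longrightarrow> \<phi> y - \<phi> t \<ge> -e*(y-t)) \<and> (y \<le> t \<longrightarrow> \<phi> t - \<phi> y \<ge> -e*(t-y))))"
    proof
      fix t
      show "\<exists>r>0. (t \<in> N' \<longrightarrow> ball t r \<subseteq> Op) \<and>
      (t \<notin> N' \<and> t \<in> {a<..<b} \<longrightarrow> (\<forall>y. \<bar>y - t\<bar> < r \<longrightarrow>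
          (t \<le> y \<longrightarrow> \<phi> y - \<phi> t \<ge> -e*(y-t)) \<and> (y \<le> t \<longrightarrow> \<phi> t - \<phi> y \<ge> -e*(t-y))))"
      proof (cases "t \<in> N'")
        case True
        then obtain r where "r > 0" "ball t r \<subseteq> Op" using Op(1,2) openE by blast
        then show ?thesis using True by blast
      next
        case False
        show ?thesis
        proof (cases "t \<in> {a<..<b}")
          case False2: False
          then show ?thesis using False by (intro exI[of _ 1]) auto
        next
          case True
          have "t \<notin> N" using False N'_def by auto
          then obtain D where D: "D \<ge> 0" "(\<phi> has_real_derivative D) (at t)" using der True by blast
          then have "(\<lambda>h. (\<phi> (t + h) - \<phi> t) / h) \<midarrow>0\<rightarrow> D" by (simp add: DERIV_def)
          then obtain s where s: "s > 0" and sH: "\<And>h. h \<noteq> 0 \<and> norm (h - 0) < s \<Longrightarrow> norm ((\<phi> (t + h) - \<phi> t) / h - D) < e"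
            using e unfolding LIM_eq by meson
          have "\<forall>y. \<bar>y - t\<bar> < s \<longrightarrow>
              (t \<le> y \<longrightarrow> \<phi> y - \<phi> t \<ge> -e*(y-t)) \<and> (y \<le> t \<longrightarrow> \<phi> t - \<phi> y \<ge> -e*(t-y))"
          proof (intro allI impI conjI)
            fix y assume y: "\<bar>y - t\<bar> < s"
            {
              assume "t \<le> y"
              show "\<phi> y - \<phi> t \<ge> -e*(y-t)"
              proof (cases "y = t")
                case False
                then have hp: "y - t > 0" using \<open>t \<le> y\<close> by simp
                have "\<bar>(\<phi> (t + (y - t)) - \<phi> t) / (y - t) - D\<bar> < e" using sH[of "y - t"] y hp by simp
                then have q: "(\<phi> y - \<phi> t) / (y - t) > -e" using D(1) by (simp add: abs_less_iff)
                have "\<phi> y - \<phi> t = ((\<phi> y - \<phi> t) / (y - t)) * (y - t)" using hp by simp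
                also have "\<dots> > -e * (y - t)" using mult_strict_right_mono[OF q hp] .
                finally show ?thesis by simp
              qed simp
            }
            {
              assume "y \<le> t"
              show "\<phi> t - \<phi> y \<ge> -e*(t-y)"
              proof (cases "y = t")
                case False
                then have hp: "y - t < 0" using \<open>y \<le> t\<close> by simp
                have "\<bar>(\<phi> (t + (y - t)) - \<phi> t) / (y - t) - D\<bar> < e" using sH[of "y - t"] y hp by simp
                then have q: "(\<phi> y - \<phi> t) / (y - t) > -e" using D(1) by (simp add: abs_less_iff)
                have "\<phi> y - \<phi> t = ((\<phi> y - \<phi> t) / (y - t)) * (y - t)" using hp by simp
                also have "\<dots> < -e * (y - t)" using mult_strict_right_mono_neg[OF q hp] .
                finally show ?thesis by (simp add: algebra_simps)
              qed simp
            }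
          qed
          then show ?thesis using s False by blast
        qed
      qed
    qed
    from choice[OF this] obtain \<rho> where \<rho>: "\<forall>t. \<rho> t > 0 \<and> (t \<in> N' \<longrightarrow> ball t (\<rho> t) \<subseteq> Op) \<and>
      (t \<notin> N' \<and> t \<in> {a<..<b} \<longrightarrow> (\<forall>y. \<bar>y - t\<bar> < \<rho> t \<longrightarrow>
          (t \<le> y \<longrightarrow> \<phi> y - \<phi> t \<ge> -e*(y-t)) \<and> (y \<le> t \<longrightarrow> \<phi> t - \<phi> y \<ge> -e*(t-y))))" ..
    have \<rho>pos: "\<And>t. \<rho> t > 0" using \<rho> by blast
    have \<rho>N: "\<And>t. t \<in> N' \<Longrightarrow> ball t (\<rho> t) \<subseteq> Op" using \<rho> by blast
    have \<rho>D: "\<And>t y. t \<notin> N' \<Longrightarrow> t \<in> {a<..<b} \<Longrightarrow> \<bar>y - t\<bar> < \<rho> t \<Longrightarrow>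
          (t \<le> y \<longrightarrow> \<phi> y - \<phi> t \<ge> -e*(y-t)) \<and> (y \<le> t \<longrightarrow> \<phi> t - \<phi> y \<ge> -e*(t-y))"
      using \<rho> by blast
    have g: "gauge (\<lambda>t. ball t (\<rho> t))" using \<rho>pos by (simp add: gauge_ball_dependent)
    obtain p where p: "p tagged_division_of {a..b}" and fine: "(\<lambda>t. ball t (\<rho> t)) fine p"
      using fine_division_exists_real[OF g] by blast
    have pfin: "finite p" using p by blast
    have pK: "\<And>x K. (x, K) \<in> p \<Longrightarrow> x \<in> K \<and> K \<subseteq> {a..b} \<and> {Inf K..Sup K} = K \<and> Inf K \<le> Sup K \<and> Inf K \<in> K \<and> Sup K \<in> K \<and> K \<subseteq> ball x (\<rho> x)"
    proof -
      fix x K assume xK: "(x, K) \<in> p"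
      have "x \<in> K" "K \<subseteq> {a..b}" using p xK by blast+
      moreover obtain u v where "K = cbox u v" using p xK by (meson tagged_division_ofD(4))
      then have Kuv: "K = {u..v}" by (simp add: box_real)
      moreover have "K \<subseteq> ball x (\<rho> x)" using fine xK by (auto simp: fine_def)
      moreover have uv: "u \<le> v" using Kuv \<open>x \<in> K\<close> by simp
      moreover have "Inf K = u" "Sup K = v" using Kuv uv by simp_all
      ultimately show "x \<in> K \<and> K \<subseteq> {a..b} \<and> {Inf K..Sup K} = K \<and> Inf K \<le> Sup K \<and> Inf K \<in> K \<and> Sup K \<in> K \<and> K \<subseteq> ball x (\<rho> x)"
        by simp
    qed
    have tot: "(\<Sum>(x,K)\<in>p. \<phi>(Sup K) - \<phi>(Inf K)) = \<phi> b - \<phi> a"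
      using additive_tagged_division_1[OF ab p] .
    have tot1: "(\<Sum>(x,K)\<in>p. Sup K - Inf K) = b - a"
      using additive_tagged_division_1[OF ab p, of "\<lambda>x. x"] by simp
    define pb where "pb = {z\<in>p. fst z \<in> N'}"
    define pg where "pg = p - pb"
    have split: "(\<Sum>(x,K)\<in>p. \<phi>(Sup K) - \<phi>(Inf K)) = (\<Sum>(x,K)\<in>pg. \<phi>(Sup K) - \<phi>(Inf K)) + (\<Sum>(x,K)\<in>pb. \<phi>(Sup K) - \<phi>(Inf K))"
      unfolding pg_def using pfin by (metis (no_types, lifting) pb_def sum.subset_diff mem_Collect_eq subsetI)
    have good: "(\<Sum>(x,K)\<in>pg. \<phi>(Sup K) - \<phi>(Inf K)) \<ge> -e * (b - a)"
    proof -
      have "(\<Sum>(x,K)\<in>pg. \<phi>(Sup K) - \<phi>(Inf K)) \<ge> (\<Sum>(x,K)\<in>pg. -e * (Sup K - Inf K))"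
      proof (rule sum_mono)
        fix z assume z: "z \<in> pg"
        obtain x K where zxK: "z = (x, K)" by force
        have xK: "(x, K) \<in> p" "x \<notin> N'" using z zxK pg_def pb_def by auto
        note P = pK[OF xK(1)]
        have xab: "x \<in> {a<..<b}" using P xK(2) N'_def by force
        have "Inf K \<in> K" "Sup K \<in> K" using P by blast+
        then have "Inf K \<in> ball x (\<rho> x)" "Sup K \<in> ball x (\<rho> x)" using P by blast+
        then have d1: "\<bar>Inf K - x\<bar> < \<rho> x" "\<bar>Sup K - x\<bar> < \<rho> x" by (auto simp: dist_real_def)
        have ix: "Inf K \<le> x" "x \<le> Sup K" using P by auto
        have "\<phi> (Sup K) - \<phi> x \<ge> -e*(Sup K - x)" using \<rho>D[OF xK(2) xab d1(2)] ix by simp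
        moreover have "\<phi> x - \<phi> (Inf K) \<ge> -e*(x - Inf K)" using \<rho>D[OF xK(2) xab d1(1)] ix by simp
        ultimately show "(case z of (x, K) \<Rightarrow> - e * (Sup K - Inf K)) \<le> (case z of (x, K) \<Rightarrow> \<phi> (Sup K) - \<phi> (Inf K))"
          using zxK by (simp add: algebra_simps)
      qed
      also have "(\<Sum>(x,K)\<in>pg. -e * (Sup K - Inf K)) = -e * (\<Sum>(x,K)\<in>pg. Sup K - Inf K)"
        by (simp add: sum_distrib_left case_prod_unfold)
      also have "(\<Sum>(x,K)\<in>pg. Sup K - Inf K) \<le> (\<Sum>(x,K)\<in>p. Sup K - Inf K)"
        apply (rule sum_mono2[OF pfin])
        using pg_def pK by (auto split: prod.splits)
      then have "-e * (\<Sum>(x,K)\<in>pg. Sup K - Inf K) \<ge> -e * (b - a)" using tot1 e by simp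
      finally show ?thesis by simp
    qed
    define pb' where "pb' = {z\<in>pb. Inf (snd z) < Sup (snd z)}"
    define h where "h = (\<lambda>z::real \<times> real set. (Inf (snd z), Sup (snd z)))"
    define Q where "Q = h ` pb'"
    have pb'p: "pb' \<subseteq> p" using pb'_def pb_def by auto
    have intd: "\<And>z1 z2. z1 \<in> pb' \<Longrightarrow> z2 \<in> pb' \<Longrightarrow> z1 \<noteq> z2 \<Longrightarrow> {Inf (snd z1)<..<Sup (snd z1)} \<inter> {Inf (snd z2)<..<Sup (snd z2)} = {}"
    proof -
      fix z1 z2 assume z: "z1 \<in> pb'" "z2 \<in> pb'" "z1 \<noteq> z2"
      obtain x1 K1 x2 K2 where e1: "z1 = (x1, K1)" and e2: "z2 = (x2, K2)" by force
      have m: "(x1, K1) \<in> p" "(x2, K2) \<in> p" using z pb'p e1 e2 by auto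
      have "interior K1 \<inter> interior K2 = {}" using tagged_division_ofD(5)[OF p m] z(3) e1 e2 by simp
      moreover have "{Inf K1..Sup K1} = K1" "{Inf K2..Sup K2} = K2" using pK m by blast+
      then have "interior K1 = {Inf K1<..<Sup K1}" "interior K2 = {Inf K2<..<Sup K2}"
        using interior_atLeastAtMost_real by metis+
      ultimately show "{Inf (snd z1)<..<Sup (snd z1)} \<inter> {Inf (snd z2)<..<Sup (snd z2)} = {}"
        using e1 e2 by simp
    qed
    have injh: "inj_on h pb'"
    proof (rule inj_onI, rule ccontr)
      fix z1 z2 assume z: "z1 \<in> pb'" "z2 \<in> pb'" "h z1 = h z2" "z1 \<noteq> z2"
      have "Inf (snd z1) < Sup (snd z1)" using z pb'_def by auto
      moreover have "Inf (snd z1) = Inf (snd z2)" "Sup (snd z1) = Sup (snd z2)" using z(3) h_def by auto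
      moreover have "{Inf (snd z1)<..<Sup (snd z1)} \<inter> {Inf (snd z2)<..<Sup (snd z2)} = {}" using intd[OF z(1,2,4)] .
      ultimately have "{Inf (snd z1)<..<Sup (snd z1)} = {}" by simp
      then show False using \<open>Inf (snd z1) < Sup (snd z1)\<close> by simp
    qed
    have Qprop: "\<forall>q\<in>Q. a \<le> fst q \<and> fst q < snd q \<and> snd q \<le> b"
    proof
      fix q assume "q \<in> Q"
      then obtain z where "z \<in> pb'" "q = h z" using Q_def by blast
      moreover obtain x K where "z = (x, K)" by force
      ultimately have xK: "(x, K) \<in> pb'" "q = (Inf K, Sup K)" using h_def by auto
      have xKp: "(x, K) \<in> p" using xK pb'p by blast
      have "Inf K < Sup K" using xK pb'_def by auto
      then have P: "K \<subseteq> {a..b}" "Inf K \<in> K" "Sup K \<in> K" "Inf K < Sup K" using pK[OF xKp] by blast+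
      then show "a \<le> fst q \<and> fst q < snd q \<and> snd q \<le> b" using xK(2)
        by auto
    qed
    have Qfin: "finite Q" using Q_def pb'p pfin finite_subset by blast
    have Qno: "nonoverl Q"
      unfolding nonoverl_def
    proof (intro ballI impI)
      fix q1 q2 assume q: "q1 \<in> Q" "q2 \<in> Q" "q1 \<noteq> q2"
      then obtain z1 z2 where z: "z1 \<in> pb'" "z2 \<in> pb'" "q1 = h z1" "q2 = h z2" using Q_def by auto
      then have "z1 \<noteq> z2" using q by auto
      then have dj: "{fst q1<..<snd q1} \<inter> {fst q2<..<snd q2} = {}" using intd z h_def by simp
      have lt: "fst q1 < snd q1" "fst q2 < snd q2" using Qprop q by auto
      show "snd q1 \<le> fst q2 \<or> snd q2 \<le> fst q1"
      proof (rule ccontr)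
        assume "\<not> (snd q1 \<le> fst q2 \<or> snd q2 \<le> fst q1)"
        then have "(max (fst q1) (fst q2) + min (snd q1) (snd q2)) / 2 \<in> {fst q1<..<snd q1} \<inter> {fst q2<..<snd q2}"
          using lt by (auto simp: max_def min_def)
        then show False using dj by blast
      qed
    qed
    have Qsub: "\<And>q. q \<in> Q \<Longrightarrow> {fst q..snd q} \<subseteq> Op"
    proof -
      fix q assume "q \<in> Q"
      then obtain z where "z \<in> pb'" "q = h z" using Q_def by blast
      moreover obtain x K where "z = (x, K)" by force
      ultimately have xK: "(x, K) \<in> pb'" "q = (Inf K, Sup K)" using h_def by auto
      have "x \<in> N'" using xK pb'_def pb_def by auto
      moreover have "K \<subseteq> ball x (\<rho> x)" "{Inf K..Sup K} = K" using pK[of x K] xK pb'p by auto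
      ultimately show "{fst q..snd q} \<subseteq> Op" using \<rho>N xK(2) by auto
    qed
    have Qlen: "(\<Sum>q\<in>Q. snd q - fst q) < \<delta>"
    proof -
      have "(\<Sum>q\<in>Q. snd q - fst q) = (\<Sum>q\<in>Q. measure lebesgue {fst q..snd q})"
        using Qprop by (intro sum.cong) auto
      also have "\<dots> = measure lebesgue (\<Union>q\<in>Q. {fst q..snd q})"
      proof (rule measure_negligible_finite_Union_image[symmetric, OF Qfin])
        show "\<And>q. q \<in> Q \<Longrightarrow> {fst q..snd q} \<in> lmeasurable" by simp
        show "pairwise (\<lambda>q1 q2. negligible ({fst q1..snd q1} \<inter> {fst q2..snd q2})) Q"
          unfolding pairwise_def
        proof (intro ballI impI)
          fix q1 q2 assume q: "q1 \<in> Q" "q2 \<in> Q" "q1 \<noteq> q2"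
          then have "snd q1 \<le> fst q2 \<or> snd q2 \<le> fst q1" using Qno nonoverl_def by blast
          then have "{fst q1..snd q1} \<inter> {fst q2..snd q2} \<subseteq> {snd q1, snd q2}" by auto
          then show "negligible ({fst q1..snd q1} \<inter> {fst q2..snd q2})"
            using negligible_subset negligible_finite by (metis finite.emptyI finite_insert)
        qed
      qed
      also have "\<dots> \<le> measure lebesgue Op"
        apply (rule measure_mono_fmeasurable)
        using Qsub Opfm Qfin by auto
      finally show ?thesis using mO by simp
    qed
    have bad0: "(\<Sum>q\<in>Q. norm (\<phi> (snd q) - \<phi> (fst q))) < e"
      using acQ[OF Qfin Qprop Qno Qlen] .
    have "(\<Sum>(x,K)\<in>pb. \<bar>\<phi>(Sup K) - \<phi>(Inf K)\<bar>) = (\<Sum>(x,K)\<in>pb'. \<bar>\<phi>(Sup K) - \<phi>(Inf K)\<bar>)"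
    proof (rule sum.mono_neutral_right)
      show "finite pb" using pfin pb_def by auto
      show "pb' \<subseteq> pb" using pb'_def by auto
      show "\<forall>i\<in>pb - pb'. (case i of (x, K) \<Rightarrow> \<bar>\<phi> (Sup K) - \<phi> (Inf K)\<bar>) = 0"
      proof
        fix z assume z: "z \<in> pb - pb'"
        obtain x K where zxK: "z = (x, K)" by force
        have "(x, K) \<in> p" using z zxK pb_def by auto
        then have "Inf K \<le> Sup K" using pK by blast
        then have "Inf K = Sup K" using z zxK pb'_def by auto
        then show "(case z of (x, K) \<Rightarrow> \<bar>\<phi> (Sup K) - \<phi> (Inf K)\<bar>) = 0" using zxK by simp
      qed
    qed
    also have "\<dots> = (\<Sum>q\<in>Q. norm (\<phi> (snd q) - \<phi> (fst q)))"
      unfolding Q_def using sum.reindex[OF injh, of "\<lambda>q. norm (\<phi> (snd q) - \<phi> (fst q))"]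
      by (simp add: h_def case_prod_unfold)
    finally have "(\<Sum>(x,K)\<in>pb. \<bar>\<phi>(Sup K) - \<phi>(Inf K)\<bar>) < e" using bad0 by simp
    moreover have "(\<Sum>(x,K)\<in>pb. \<phi>(Sup K) - \<phi>(Inf K)) \<ge> - (\<Sum>(x,K)\<in>pb. \<bar>\<phi>(Sup K) - \<phi>(Inf K)\<bar>)"
      by (simp add: sum_negf[symmetric] case_prod_unfold) (rule sum_mono, simp)
    ultimately have bad: "(\<Sum>(x,K)\<in>pb. \<phi>(Sup K) - \<phi>(Inf K)) \<ge> -e" by simp
    show ?thesis using tot split good bad by (simp add: algebra_simps)
  qed
  show ?thesis
  proof (rule field_le_epsilon)
    fix e :: real assume e: "e > 0"
    define e' where "e' = e / (b - a + 1)"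
    have e': "e' > 0" using e ab e'_def by simp
    have "e' * (b - a + 1) = e" using ab unfolding e'_def by simp
    then have "e' * (b - a) + e' = e" by (simp add: algebra_simps)
    then show "\<phi> a \<le> \<phi> b + e" using key[OF e'] by simp
  qed
qed

lemma ac_dominated:
  fixes x :: "real \<Rightarrow> 'a::real_normed_vector" and \<psi> :: "real \<Rightarrow> 'b::real_normed_vector"
  assumes ac: "abs_continuous_on a b x" and \<eta>: "\<eta> > 0" and L: "L \<ge> 0" and K: "K \<ge> 0"
    and dom: "\<And>s r. a \<le> s \<Longrightarrow> s \<le> r \<Longrightarrow> r \<le> b \<Longrightarrow> norm (x r - x s) < \<eta> \<Longrightarrow>
               norm (\<psi> r - \<psi> s) \<le> L*(r-s) + K*norm(x r - x s)"
  shows "abs_continuous_on a b \<psi>"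
  unfolding abs_continuous_on_def
proof (intro allI impI)
  fix \<epsilon> :: real assume \<epsilon>: "\<epsilon> > 0"
  define \<epsilon>1 where "\<epsilon>1 = min \<eta> (\<epsilon> / (2*(K+1)))"
  have \<epsilon>1: "\<epsilon>1 > 0" using \<epsilon> \<eta> K \<epsilon>1_def by simp
  obtain \<delta>x where \<delta>x: "\<delta>x > 0" and H: "\<forall>N s r. (\<forall>k<N. a \<le> s k \<and> s k \<le> r k \<and> r k \<le> b) \<and> (\<forall>k. Suc k < N \<longrightarrow> r k \<le> s (Suc k))
        \<and> (\<Sum>k<N. r k - s k) < \<delta>x \<longrightarrow> (\<Sum>k<N. norm (x (r k) - x (s k))) < \<epsilon>1"
    using ac[unfolded abs_continuous_on_def, rule_format, OF \<epsilon>1] by auto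
  define \<delta> where "\<delta> = min \<delta>x (\<epsilon> / (2*(L+1)))"
  have \<delta>: "\<delta> > 0" using \<delta>x \<epsilon> L \<delta>_def by simp
  show "\<exists>\<delta>>0. \<forall>N s r. (\<forall>k<N. a \<le> s k \<and> s k \<le> r k \<and> r k \<le> b) \<and> (\<forall>k. Suc k < N \<longrightarrow> r k \<le> s (Suc k))
        \<and> (\<Sum>k<N. r k - s k) < \<delta> \<longrightarrow> (\<Sum>k<N. norm (\<psi> (r k) - \<psi> (s k))) < \<epsilon>"
  proof (intro exI[of _ \<delta>] conjI allI impI)
    show "\<delta> > 0" by (rule \<delta>)
    fix N s r assume A: "(\<forall>k<N. a \<le> s k \<and> s k \<le> r k \<and> r k \<le> b) \<and> (\<forall>k. Suc k < N \<longrightarrow> r k \<le> s (Suc k))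
        \<and> (\<Sum>k<N. r k - s k) < \<delta>"
    have sx: "(\<Sum>k<N. norm (x (r k) - x (s k))) < \<epsilon>1" using H A \<delta>_def by auto
    have each: "\<And>k. k < N \<Longrightarrow> norm (x (r k) - x (s k)) < \<eta>"
    proof -
      fix k assume k: "k < N"
      have "norm (x (r k) - x (s k)) \<le> (\<Sum>k<N. norm (x (r k) - x (s k)))"
        by (rule member_le_sum) (use k in auto)
      then show "norm (x (r k) - x (s k)) < \<eta>" using sx \<epsilon>1_def by linarith
    qed
    have "(\<Sum>k<N. norm (\<psi> (r k) - \<psi> (s k))) \<le> (\<Sum>k<N. L*(r k - s k) + K*norm (x (r k) - x (s k)))"
      by (rule sum_mono) (use A each dom in auto)
    also have "\<dots> = L * (\<Sum>k<N. r k - s k) + K * (\<Sum>k<N. norm (x (r k) - x (s k)))"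
      by (simp add: sum.distrib sum_distrib_left)
    also have "\<dots> < \<epsilon>"
    proof -
      have "L * (\<Sum>k<N. r k - s k) \<le> L * (\<epsilon> / (2*(L+1)))"
        using A \<delta>_def L by (intro mult_left_mono) auto
      also have "\<dots> < \<epsilon>/2" using L \<epsilon> by (simp add: field_simps)
      finally have 1: "L * (\<Sum>k<N. r k - s k) < \<epsilon>/2" .
      have "K * (\<Sum>k<N. norm (x (r k) - x (s k))) \<le> K * (\<epsilon> / (2*(K+1)))"
        using sx \<epsilon>1_def K by (intro mult_left_mono) auto
      also have "\<dots> < \<epsilon>/2" using K \<epsilon> by (simp add: field_simps)
      finally have 2: "K * (\<Sum>k<N. norm (x (r k) - x (s k))) < \<epsilon>/2" .
      show ?thesis using 1 2 by linarith
    qed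
    finally show "(\<Sum>k<N. norm (\<psi> (r k) - \<psi> (s k))) < \<epsilon>" .
  qed
qed

lemma ac_continuous:
  fixes x :: "real \<Rightarrow> 'a::real_normed_vector"
  assumes ac: "abs_continuous_on a b x"
  shows "continuous_on {a..b} x"
  unfolding continuous_on_iff
proof (intro ballI allI impI)
  fix t e assume t: "t \<in> {a..b}" and e: "(e::real) > 0"
  obtain \<delta> where \<delta>: "\<delta> > 0" and H: "\<forall>N s r. (\<forall>k<N. a \<le> s k \<and> s k \<le> r k \<and> r k \<le> b) \<and> (\<forall>k. Suc k < N \<longrightarrow> r k \<le> s (Suc k))
        \<and> (\<Sum>k<N. r k - s k) < \<delta> \<longrightarrow> (\<Sum>k<N. norm (x (r k) - x (s k))) < e"
    using ac[unfolded abs_continuous_on_def, rule_format, OF e] by auto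
  show "\<exists>d>0. \<forall>t'\<in>{a..b}. dist t' t < d \<longrightarrow> dist (x t') (x t) < e"
  proof (intro exI[of _ \<delta>] conjI ballI impI)
    show "\<delta> > 0" by (rule \<delta>)
    fix t' assume t': "t' \<in> {a..b}" and d: "dist t' t < \<delta>"
    have mm: "max t t' - min t t' < \<delta>" "min t t' \<le> max t t'" using d by (auto simp: dist_real_def max_def min_def)
    have 1: "norm (x (max t t') - x (min t t')) < e"
      using H[rule_format, of 1 "\<lambda>_. min t t'" "\<lambda>_. max t t'"] t t' mm
      by auto
    show "dist (x t') (x t) < e"
    proof (cases "t \<le> t'")
      case True
      then show ?thesis using 1 by (simp add: dist_norm max_def min_def)
    next
      case False
      then show ?thesis using 1 by (simp add: dist_norm max_def min_def norm_minus_commute)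
    qed
  qed
qed

lemma ac_lip_bound:
  fixes x :: "real \<Rightarrow> 'a::real_inner"
  assumes ab: "a \<le> b" and ac: "abs_continuous_on a b x" and N: "N \<in> null_sets lebesgue"
    and M: "M \<ge> 0"
    and der: "\<And>t. t \<in> {a<..<b} \<Longrightarrow> t \<notin> N \<Longrightarrow> \<exists>v. (x has_vector_derivative v) (at t) \<and> norm v \<le> M"
  shows "norm (x b - x a) \<le> M * (b - a)"
proof (cases "x b = x a")
  case True
  then show ?thesis using M ab by simp
next
  case False
  define e where "e = (1 / norm (x b - x a)) *\<^sub>R (x b - x a)"
  have ne: "norm e = 1" using False e_def by simp
  have ee: "e \<bullet> (x b - x a) = norm (x b - x a)"
    using False unfolding e_def by (simp add: power2_norm_eq_inner[symmetric] power2_eq_square)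
  define \<psi> where "\<psi> = (\<lambda>t. M * t - e \<bullet> x t)"
  have acp: "abs_continuous_on a b \<psi>"
  proof (rule ac_dominated[OF ac zero_less_one M zero_le_one])
    fix s r assume "a \<le> s" "s \<le> r" "r \<le> b"
    have "\<bar>e \<bullet> (x r - x s)\<bar> \<le> norm e * norm (x r - x s)" by (rule Cauchy_Schwarz_ineq2)
    then have "\<bar>e \<bullet> (x r - x s)\<bar> \<le> norm (x r - x s)" using ne by simp
    moreover have "\<psi> r - \<psi> s = M * (r - s) - e \<bullet> (x r - x s)"
      unfolding \<psi>_def by (simp add: algebra_simps inner_diff_right)
    ultimately show "norm (\<psi> r - \<psi> s) \<le> M * (r - s) + 1 * norm (x r - x s)"
      using M \<open>s \<le> r\<close> by (simp add: abs_le_iff) (smt (verit) mult_nonneg_nonneg)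
  qed
  have "\<psi> a \<le> \<psi> b"
  proof (rule ac_mono_core[OF ab acp N])
    fix t assume t: "t \<in> {a<..<b}" "t \<notin> N"
    obtain v where v: "(x has_vector_derivative v) (at t)" "norm v \<le> M" using der[OF t] by blast
    have "(x has_derivative (\<lambda>h. h *\<^sub>R v)) (at t)" using v(1) by (simp add: has_vector_derivative_def)
    then have "((\<lambda>s. e \<bullet> x s) has_derivative (\<lambda>h. e \<bullet> (h *\<^sub>R v))) (at t)"
      by (rule has_derivative_inner_right)
    then have "(\<psi> has_derivative (\<lambda>h. M * h - e \<bullet> (h *\<^sub>R v))) (at t)"
      unfolding \<psi>_def by (intro has_derivative_diff has_derivative_mult_right has_derivative_ident)
    moreover have "(\<lambda>h. M * h - e \<bullet> (h *\<^sub>R v)) = (*) (M - e \<bullet> v)"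
      by (auto simp: fun_eq_iff algebra_simps)
    ultimately have "(\<psi> has_real_derivative (M - e \<bullet> v)) (at t)"
      by (simp add: has_field_derivative_def)
    moreover have "e \<bullet> v \<le> M"
    proof -
      have "e \<bullet> v \<le> norm e * norm v" using Cauchy_Schwarz_ineq2[of e v] by simp
      then show ?thesis using ne v(2) by simp
    qed
    ultimately show "\<exists>D\<ge>0. (\<psi> has_real_derivative D) (at t)" by (intro exI[of _ "M - e \<bullet> v"]) simp
  qed
  then have "e \<bullet> (x b - x a) \<le> M * (b - a)" unfolding \<psi>_def by (simp add: algebra_simps inner_diff_right)
  then show ?thesis using ee by simp
qed

lemma lipschitz_near_compact:
  fixes V :: "'a::euclidean_space \<Rightarrow> real"
  assumes K: "compact K" and U: "open U" "K \<subseteq> U"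
    and dV: "\<forall>z\<in>U. (V has_derivative (\<lambda>h. G z \<bullet> h)) (at z)" and cG: "continuous_on U G"
  obtains \<eta> L where "\<eta> > 0" "L \<ge> 0" "\<And>y z. y \<in> K \<Longrightarrow> norm (z - y) < \<eta> \<Longrightarrow> \<bar>V z - V y\<bar> \<le> L * norm (z - y)"
proof -
  obtain \<epsilon>0 where \<epsilon>0: "\<epsilon>0 > 0" "(\<Union>x\<in>K. ball x \<epsilon>0) \<subseteq> U"
    using compact_subset_open_imp_ball_epsilon_subset[OF K U] by blast
  define \<eta> where "\<eta> = \<epsilon>0 / 2"
  have \<eta>: "\<eta> > 0" "\<eta> < \<epsilon>0" using \<epsilon>0 \<eta>_def by auto
  define K' where "K' = (\<lambda>(y,w). y + w) ` (K \<times> cball 0 \<eta>)"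
  have cK': "compact K'"
    unfolding K'_def
    by (intro compact_continuous_image compact_Times K compact_cball continuous_on_add)
       (auto intro!: continuous_intros simp: case_prod_unfold)
  have K'U: "K' \<subseteq> U"
  proof
    fix z assume "z \<in> K'"
    then obtain y w where yw: "y \<in> K" "norm w \<le> \<eta>" "z = y + w" unfolding K'_def by auto
    then have "z \<in> ball y \<epsilon>0" using \<eta> by (simp add: dist_norm)
    then show "z \<in> U" using \<epsilon>0 yw by blast
  qed
  have "compact (G ` K')" using cK' K'U cG by (meson compact_continuous_image continuous_on_subset)
  then obtain B where B: "\<And>z. z \<in> K' \<Longrightarrow> norm (G z) \<le> B"
    using compact_imp_bounded bounded_iff by (metis imageI)
  define L where "L = max B 0"
  show ?thesis
  proof (rule that[OF \<eta>(1)])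
    show "L \<ge> 0" using L_def by simp
    fix y z assume y: "y \<in> K" and z: "norm (z - y) < \<eta>"
    have sub: "cball y \<eta> \<subseteq> K'"
    proof
      fix w assume "w \<in> cball y \<eta>"
      then have "norm (w - y) \<le> \<eta>" by (simp add: dist_norm norm_minus_commute)
      then have "(y, w - y) \<in> K \<times> cball 0 \<eta>" using y by simp
      then show "w \<in> K'" unfolding K'_def by force
    qed
    have "norm (V z - V y) \<le> L * norm (z - y)"
    proof (rule differentiable_bound[OF convex_cball])
      fix w assume w: "w \<in> cball y \<eta>"
      then have wU: "w \<in> U" using sub K'U by blast
      show "(V has_derivative (\<lambda>h. G w \<bullet> h)) (at w within cball y \<eta>)"
        using dV wU has_derivative_at_withinI by blast
      show "onorm (\<lambda>h. G w \<bullet> h) \<le> L"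
      proof (rule onorm_le)
        fix h
        have "norm (G w \<bullet> h) \<le> norm (G w) * norm h" using Cauchy_Schwarz_ineq2 by simp
        also have "\<dots> \<le> L * norm h" using B[of w] w sub L_def by (intro mult_right_mono) auto
        finally show "norm (G w \<bullet> h) \<le> L * norm h" .
      qed
    next
      show "z \<in> cball y \<eta>" using z by (simp add: dist_norm norm_minus_commute)
      show "y \<in> cball y \<eta>" using \<eta> by simp
    qed
    then show "\<bar>V z - V y\<bar> \<le> L * norm (z - y)" by simp
  qed
qed

lemma ac_compose:
  fixes X :: "real \<Rightarrow> 'a::euclidean_space" and V :: "'a \<Rightarrow> real"
  assumes ac: "abs_continuous_on a b X" and U: "open U" "X ` {a..b} \<subseteq> U"
    and dV: "\<forall>z\<in>U. (V has_derivative (\<lambda>h. G z \<bullet> h)) (at z)" and cG: "continuous_on U G"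
  shows "abs_continuous_on a b (\<lambda>t. V (X t))"
proof -
  have "compact (X ` {a..b})" using ac_continuous[OF ac] compact_continuous_image by blast
  then obtain \<eta> L where \<eta>: "\<eta> > 0" "L \<ge> 0"
    and lip: "\<And>y z. y \<in> X ` {a..b} \<Longrightarrow> norm (z - y) < \<eta> \<Longrightarrow> \<bar>V z - V y\<bar> \<le> L * norm (z - y)"
    using lipschitz_near_compact[OF _ U dV cG] by blast
  show ?thesis
  proof (rule ac_dominated[OF ac \<eta>(1) order_refl \<eta>(2)])
    fix s r assume "a \<le> s" "s \<le> r" "r \<le> b" "norm (X r - X s) < \<eta>"
    then show "norm (V (X r) - V (X s)) \<le> 0 * (r - s) + L * norm (X r - X s)"
      using lip[of "X s" "X r"] by simp
  qed
qed

lemma crossing: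
  fixes \<delta> :: "real \<Rightarrow> real"
  assumes cont: "continuous_on {0..t1} \<delta>" and t1: "0 \<le> t1" and d0: "\<delta> 0 \<ge> d1"
    and dt1: "\<delta> t1 < c" and cd: "c < d1"
  obtains \<tau>1 \<tau>2 where "0 \<le> \<tau>1" "\<tau>1 < \<tau>2" "\<tau>2 \<le> t1" "\<delta> \<tau>1 = d1" "\<delta> \<tau>2 = c"
    "\<forall>t\<in>{\<tau>1..\<tau>2}. c \<le> \<delta> t \<and> \<delta> t \<le> d1"
proof -
  define S2 where "S2 = {t \<in> {0..t1}. \<delta> t \<le> c}"
  have S2c: "closed S2" unfolding S2_def
    by (rule continuous_on_closed_Collect_le[OF cont continuous_on_const]) simp
  have S2ne: "S2 \<noteq> {}" using dt1 t1 S2_def by force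
  have S2b: "bdd_below S2" unfolding S2_def by (rule bdd_belowI[of _ 0]) auto
  define \<tau>2 where "\<tau>2 = Inf S2"
  have \<tau>2S: "\<tau>2 \<in> S2" using closed_contains_Inf[OF S2ne S2b S2c] \<tau>2_def by simp
  then have \<tau>2r: "0 \<le> \<tau>2" "\<tau>2 \<le> t1" "\<delta> \<tau>2 \<le> c" using S2_def by auto
  have below2: "\<delta> t > c" if "0 \<le> t" "t < \<tau>2" for t
  proof (rule ccontr)
    assume "\<not> \<delta> t > c"
    then have "t \<in> S2" using that \<tau>2r S2_def by auto
    then have "\<tau>2 \<le> t" unfolding \<tau>2_def using cInf_lower[OF _ S2b] by blast
    then show False using that by simp
  qed
  have \<tau>2pos: "\<tau>2 > 0"
  proof (rule ccontr)
    assume "\<not> \<tau>2 > 0"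
    then have "\<tau>2 = 0" using \<tau>2r by simp
    then show False using \<tau>2r d0 cd by simp
  qed
  have "\<delta> \<tau>2 \<ge> c"
  proof (rule continuous_ge_on_closure[of "{0..<\<tau>2}" \<delta> \<tau>2 c])
    show "continuous_on (closure {0..<\<tau>2}) \<delta>" using \<tau>2pos \<tau>2r by (auto intro: continuous_on_subset[OF cont])
    show "\<tau>2 \<in> closure {0..<\<tau>2}" using \<tau>2pos by simp
    show "\<And>x. x \<in> {0..<\<tau>2} \<Longrightarrow> c \<le> \<delta> x" using below2 by force
  qed
  then have d\<tau>2: "\<delta> \<tau>2 = c" using \<tau>2r by simp
  define S1 where "S1 = {t \<in> {0..\<tau>2}. d1 \<le> \<delta> t}"
  have cont2: "continuous_on {0..\<tau>2} \<delta>" using cont \<tau>2r by (auto intro: continuous_on_subset)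
  have S1c: "closed S1" unfolding S1_def
    by (rule continuous_on_closed_Collect_le[OF continuous_on_const cont2]) simp
  have S1ne: "S1 \<noteq> {}" using d0 \<tau>2r S1_def by force
  have S1b: "bdd_above S1" unfolding S1_def by (rule bdd_aboveI[of _ \<tau>2]) auto
  define \<tau>1 where "\<tau>1 = Sup S1"
  have \<tau>1S: "\<tau>1 \<in> S1" using closed_contains_Sup[OF S1ne S1b S1c] \<tau>1_def by simp
  then have \<tau>1r: "0 \<le> \<tau>1" "\<tau>1 \<le> \<tau>2" "d1 \<le> \<delta> \<tau>1" using S1_def by auto
  have \<tau>12: "\<tau>1 < \<tau>2"
  proof (rule ccontr)
    assume "\<not> \<tau>1 < \<tau>2"
    then have "\<tau>1 = \<tau>2" using \<tau>1r by simp
    then show False using \<tau>1r d\<tau>2 cd by simp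
  qed
  have above1: "\<delta> t < d1" if "\<tau>1 < t" "t \<le> \<tau>2" for t
  proof (rule ccontr)
    assume "\<not> \<delta> t < d1"
    then have "t \<in> S1" using that \<tau>1r S1_def by auto
    then have "t \<le> \<tau>1" unfolding \<tau>1_def using cSup_upper[OF _ S1b] by blast
    then show False using that by simp
  qed
  have "\<delta> \<tau>1 \<le> d1"
  proof (rule continuous_le_on_closure[of "{\<tau>1<..\<tau>2}" \<delta> \<tau>1 d1])
    show "continuous_on (closure {\<tau>1<..\<tau>2}) \<delta>" using \<tau>12 \<tau>1r by (auto intro: continuous_on_subset[OF cont2])
    show "\<tau>1 \<in> closure {\<tau>1<..\<tau>2}" using \<tau>12 by simp
    show "\<And>x. x \<in> {\<tau>1<..\<tau>2} \<Longrightarrow> \<delta> x \<le> d1" using above1 by force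
  qed
  then have d\<tau>1: "\<delta> \<tau>1 = d1" using \<tau>1r by simp
  show ?thesis
  proof (rule that[OF \<tau>1r(1) \<tau>12 \<tau>2r(2) d\<tau>1 d\<tau>2], intro ballI conjI)
    fix t assume t: "t \<in> {\<tau>1..\<tau>2}"
    show "c \<le> \<delta> t"
    proof (cases "t = \<tau>2")
      case False
      then show ?thesis using below2[of t] t \<tau>1r by force
    qed (simp add: d\<tau>2)
    show "\<delta> t \<le> d1"
    proof (cases "t = \<tau>1")
      case False
      then show ?thesis using above1[of t] t by force
    qed (simp add: d\<tau>1)
  qed
qed

lemma classK_mono:
  assumes "classK \<alpha>" "0 \<le> s" "s \<le> s'"
  shows "\<alpha> s \<le> \<alpha> s'"
proof (cases "s = s'")
  case False
  then have "s < s'" using assms by simp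
  moreover have "strict_mono_on {0..} \<alpha>" using assms(1) by (simp add: classK_def)
  ultimately have "\<alpha> s < \<alpha> s'" using assms(2,3) by (intro strict_mono_onD[of "{0..}" \<alpha>]) auto
  then show ?thesis by simp
qed simp

lemma tt_mono:
  fixes tt :: "nat \<Rightarrow> real"
  assumes "\<forall>j\<le>J. tt j \<le> tt (Suc j)"
  shows "i \<le> k \<Longrightarrow> k \<le> Suc J \<Longrightarrow> tt i \<le> tt k"
proof (induction k)
  case 0
  then show ?case by simp
next
  case (Suc k)
  show ?case
  proof (cases "i = Suc k")
    case False
    then have "i \<le> k" "k \<le> J" using Suc.prems by auto
    then show ?thesis using Suc.IH assms by (meson Suc_leD le_trans order_trans Suc.prems(2))
  qed simp
qed

lemma hybrid_first_segment:
  fixes x :: "real \<times> nat \<Rightarrow> 'a::euclidean_space"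
  assumes feas: "feasible C f D g \<T> X E x u"
    and nP3: "\<not> P3 A \<alpha> E x" and nP4: "\<not> P4 A \<alpha> E x"
    and ad: "\<alpha> (infdist (x (0,0)) A) \<le> infdist (x (0,0)) A"
  obtains t1 where "t1 > 0" "\<And>t. (t, 0) \<in> E \<longleftrightarrow> t \<in> {0..t1}"
    "\<And>s i. (s, i) \<in> E \<Longrightarrow> i \<ge> 1 \<Longrightarrow> t1 \<le> s"
    "infdist (x (t1, 0)) A < \<alpha> (infdist (x (0,0)) A)"
proof -
  obtain J0 tt where tt0: "tt 0 = 0" and ttm: "\<forall>j\<le>J0. tt j \<le> tt (Suc j)"
    and Eeq: "E = (\<Union>j\<le>J0. {tt j..tt (Suc j)} \<times> {j})"
    using feas unfolding feasible_def compact_htd_def by blast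
  define t1 where "t1 = tt 1"
  have mem0: "(t, 0) \<in> E \<longleftrightarrow> t \<in> {0..t1}" for t
    unfolding Eeq t1_def using tt0 by auto
  have memi: "t1 \<le> s" if "(s, i) \<in> E" "i \<ge> 1" for s i
  proof -
    have "i \<le> J0" "s \<ge> tt i" using that(1) unfolding Eeq by auto
    moreover have "tt 1 \<le> tt i" using tt_mono[OF ttm, of 1 i] that(2) \<open>i \<le> J0\<close> by simp
    ultimately show ?thesis unfolding t1_def by simp
  qed
  have t1nn: "0 \<le> t1" using ttm tt0 t1_def by (metis One_nat_def le0)
  let ?a = "\<alpha> (infdist (x (0,0)) A)"
  have lt: "infdist (x (t1, 0)) A < ?a"
  proof (cases "J0 = 0")
    case False
    have "(t1, 0) \<in> E" using mem0 t1nn by simp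
    moreover have "(t1, Suc 0) \<in> E"
    proof -
      have "1 \<le> J0" using False by simp
      moreover have "tt 1 \<le> tt (Suc 1)" using ttm \<open>1 \<le> J0\<close> by blast
      then have "tt 1 \<le> tt 2" by (simp add: numeral_2_eq_2)
      ultimately have "(tt 1, Suc 0) \<in> {tt 1..tt (Suc 1)} \<times> {1}" by (simp add: numeral_2_eq_2)
      then show ?thesis unfolding Eeq t1_def using \<open>1 \<le> J0\<close> by blast
    qed
    ultimately show ?thesis using nP3 unfolding P3_def by force
  next
    case True
    obtain T J where TJ: "terminal_time E T J" "infdist (x (T, J)) A < ?a"
      using nP4 unfolding P4_def by force
    have "(T, J) \<in> E" using TJ(1) terminal_time_def by blast
    then have "J = 0" "T \<le> t1" using True unfolding Eeq t1_def by auto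
    moreover have "t1 \<le> T" using TJ(1) mem0 t1nn unfolding terminal_time_def by force
    ultimately show ?thesis using TJ(2) by simp
  qed
  have "t1 > 0"
  proof (rule ccontr)
    assume "\<not> t1 > 0"
    then have "t1 = 0" using t1nn by simp
    then show False using lt ad by simp
  qed
  then show ?thesis using that mem0 memi lt by blast
qed

lemma P2_from_window:
  assumes mem0: "\<And>t. (t, 0) \<in> E \<longleftrightarrow> t \<in> {0..t1}"
    and memi: "\<And>s i. (s, i) \<in> E \<Longrightarrow> i \<ge> 1 \<Longrightarrow> t1 \<le> s"
    and w: "0 \<le> \<tau>1" "\<tau>1 \<le> \<tau>2" "\<tau>2 \<le> t1" "\<tau>2 - \<tau>1 \<ge> \<alpha> (infdist (x (0,0)) A)"
    and bnd: "\<And>t. t \<in> {\<tau>1..\<tau>2} \<Longrightarrow> infdist (x (t, 0)) A \<ge> \<alpha> (infdist (x (0,0)) A)"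
  shows "P2 A \<alpha> E x"
  unfolding P2_def
proof (rule exI[of _ \<tau>1], rule exI[of _ "0::nat"], rule exI[of _ \<tau>2], rule exI[of _ "0::nat"], intro conjI allI impI)
  show "(\<tau>1, 0) \<in> E" "(\<tau>2, 0) \<in> E" using mem0 w by auto
  show "\<tau>1 + real 0 \<le> \<tau>2 + real 0" using w by simp
  show "\<tau>2 - \<tau>1 \<ge> \<alpha> (infdist (x (0,0)) A)" using w by simp
  fix s i assume H: "(s, i) \<in> E \<and> \<tau>1 + real 0 \<le> s + real i \<and> s + real i \<le> \<tau>2 + real 0"
  show "\<alpha> (infdist (x (0,0)) A) \<le> infdist (x (s, i)) A"
  proof (cases "i = 0")
    case True
    then show ?thesis using H bnd by simp
  next
    case False
    then have "t1 \<le> s" using memi[of s i] H by simp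
    then show ?thesis using H w False by simp
  qed
qed

lemma classK_exists:
  fixes P :: "real \<Rightarrow> real \<Rightarrow> bool"
  assumes down: "\<And>s a b. s > 0 \<Longrightarrow> P s a \<Longrightarrow> 0 < b \<Longrightarrow> b \<le> a \<Longrightarrow> P s b"
    and mono: "\<And>s s' a. 0 < s \<Longrightarrow> s \<le> s' \<Longrightarrow> P s a \<Longrightarrow> P s' a"
    and ex: "\<And>s. s > 0 \<Longrightarrow> \<exists>a>0. P s a"
  shows "\<exists>\<alpha>. classK \<alpha> \<and> (\<forall>s>0. P s (\<alpha> s))"
proof -
  define S where "S s = {b. 0 < b \<and> b \<le> 1 \<and> P s b}" for s
  define m where "m s = Sup (S s)" for s
  have Sne: "S s \<noteq> {}" if s0: "s > 0" for s
  proof -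
    obtain a where "a > 0" "P s a" using ex[OF s0] by blast
    then have "P s (min a 1)" using down[OF s0, of a "min a 1"] by simp
    then have "min a 1 \<in> S s" using \<open>a > 0\<close> unfolding S_def by simp
    then show ?thesis by blast
  qed
  have Sbdd: "bdd_above (S s)" for s unfolding S_def by (rule bdd_aboveI[of _ 1]) auto
  have mpos: "m s > 0" if s0: "s > 0" for s
  proof -
    obtain b where "b \<in> S s" using Sne[OF s0] by blast
    then have "b \<le> m s" unfolding m_def using cSup_upper[OF _ Sbdd] by blast
    moreover have "b > 0" using \<open>b \<in> S s\<close> unfolding S_def by simp
    ultimately show ?thesis by simp
  qed
  have mprop: "P s b" if sb: "s > 0" "0 < b" "b < m s" for s b
  proof -
    have "b < Sup (S s)" using sb(3) m_def by simp
    then obtain c where c: "c \<in> S s" "b < c" using less_cSupE[of b "S s"] Sne[OF sb(1)] by blast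
    then have "P s c" unfolding S_def by simp
    then show ?thesis using down[OF sb(1) _ sb(2), of c] c(2) by simp
  qed
  have mmono: "m s \<le> m s'" if "0 < s" "s \<le> s'" for s s'
  proof -
    have "S s \<subseteq> S s'"
    proof
      fix b assume "b \<in> S s"
      then have b: "0 < b" "b \<le> 1" "P s b" unfolding S_def by simp_all
      then have "P s' b" using mono[OF that] by blast
      then show "b \<in> S s'" using b unfolding S_def by simp
    qed
    then show ?thesis unfolding m_def using cSup_subset_mono[OF Sne[OF that(1)] Sbdd] by blast
  qed
  define T where "T s = (\<lambda>r. m r / 2 + \<bar>s - r\<bar>) ` {0<..}" for s
  define h where "h s = Inf (T s)" for s
  have Tne: "T s \<noteq> {}" for s unfolding T_def by auto
  have Tbdd: "bdd_below (T s)" for s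
  proof (rule bdd_belowI[of _ 0])
    fix x assume "x \<in> T s"
    then obtain r where r: "r > 0" "x = m r / 2 + \<bar>s - r\<bar>" unfolding T_def by auto
    then show "0 \<le> x" using mpos[OF r(1)] by simp
  qed
  have h_le: "h s \<le> m r / 2 + \<bar>s - r\<bar>" if "r > 0" for s r
  proof -
    have "m r / 2 + \<bar>s - r\<bar> \<in> T s" using that unfolding T_def by blast
    then show ?thesis unfolding h_def by (rule cInf_lower[OF _ Tbdd])
  qed
  have h_ge: "c \<le> h s" if "\<And>r. r > 0 \<Longrightarrow> c \<le> m r / 2 + \<bar>s - r\<bar>" for s c
    unfolding h_def
  proof (rule cInf_greatest[OF Tne])
    fix x assume "x \<in> T s"
    then obtain r where "r > 0" "x = m r / 2 + \<bar>s - r\<bar>" unfolding T_def by blast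
    then show "c \<le> x" using that by simp
  qed
  have h_nonneg: "h s \<ge> 0" for s
  proof (rule h_ge)
    fix r :: real assume "r > 0"
    then show "0 \<le> m r / 2 + \<bar>s - r\<bar>" using mpos[of r] by simp
  qed
  have h_lip: "h s \<le> h s' + \<bar>s - s'\<bar>" for s s'
  proof -
    have "h s - \<bar>s - s'\<bar> \<le> h s'"
    proof (rule h_ge)
      fix r :: real assume r: "r > 0"
      have "h s \<le> m r / 2 + \<bar>s - r\<bar>" by (rule h_le[OF r])
      then show "h s - \<bar>s - s'\<bar> \<le> m r / 2 + \<bar>s' - r\<bar>" by linarith
    qed
    then show ?thesis by simp
  qed
  have h_pos: "h s > 0" if s: "s > 0" for s
  proof -
    have "min (m (s/2) / 2) (s/2) \<le> h s"
    proof (rule h_ge)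
      fix r :: real assume r: "r > 0"
      show "min (m (s/2) / 2) (s/2) \<le> m r / 2 + \<bar>s - r\<bar>"
      proof (cases "r \<ge> s/2")
        case True
        then have "m (s/2) \<le> m r" using mmono s by simp
        then show ?thesis by simp
      next
        case False
        then show ?thesis using mpos[OF r] by simp
      qed
    qed
    moreover have "min (m (s/2) / 2) (s/2) > 0" using mpos[of "s/2"] s by simp
    ultimately show ?thesis by linarith
  qed
  have h_lt: "h s < m s" if "s > 0" for s
    using h_le[OF that, of s] mpos[OF that] by simp
  have h_mono: "h s \<le> h s'" if "0 < s" "s \<le> s'" for s s'
  proof (rule h_ge)
    fix r :: real assume r: "r > 0"
    show "h s \<le> m r / 2 + \<bar>s' - r\<bar>"
    proof (cases "r \<le> s")
      case True
      then show ?thesis using h_le[OF r, of s] that by simp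
    next
      case False
      then have "m s \<le> m r" using mmono that by simp
      moreover have "h s \<le> m s / 2" using h_le[OF that(1), of s] by simp
      ultimately show ?thesis by simp
    qed
  qed
  have hcont: "continuous_on UNIV h"
    unfolding continuous_on_iff
  proof (intro ballI allI impI)
    fix x e :: real assume e: "e > 0"
    show "\<exists>d>0. \<forall>x'\<in>UNIV. dist x' x < d \<longrightarrow> dist (h x') (h x) < e"
    proof (intro exI[of _ e] conjI ballI impI)
      fix x' assume "dist x' x < e"
      moreover have "h x' \<le> h x + \<bar>x' - x\<bar>" "h x \<le> h x' + \<bar>x - x'\<bar>" using h_lip by auto
      ultimately show "dist (h x') (h x) < e" unfolding dist_real_def abs_less_iff by (simp add: abs_if split: if_splits)
    qed (rule e)
  qed
  define \<alpha> where "\<alpha> s = s / (1 + s) * h s" for s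
  have "classK \<alpha>"
    unfolding classK_def
  proof (intro conjI allI impI)
    show "continuous_on {0..} \<alpha>"
      unfolding \<alpha>_def
    proof (rule continuous_on_mult)
      show "continuous_on {0..} h" using continuous_on_subset[OF hcont] by blast
      show "continuous_on {0..} (\<lambda>s::real. s / (1 + s))"
        by (rule continuous_on_divide) (auto intro: continuous_on_add continuous_on_id continuous_on_const)
    qed
    show "strict_mono_on {0..} \<alpha>"
    proof (rule strict_mono_onI)
      fix r s :: real assume rs: "r \<in> {0..}" "s \<in> {0..}" "r < s"
      then have s0: "s > 0" by simp
      have "\<alpha> s > 0" unfolding \<alpha>_def using s0 h_pos[OF s0] by simp
      show "\<alpha> r < \<alpha> s"
      proof (cases "r = 0")
        case True
        then show ?thesis using \<open>\<alpha> s > 0\<close> by (simp add: \<alpha>_def)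
      next
        case False
        then have r0: "r > 0" using rs by simp
        have "\<alpha> r \<le> r / (1 + r) * h s"
          unfolding \<alpha>_def using h_mono[OF r0 order.strict_implies_order[OF rs(3)]] r0
          by (intro mult_left_mono) auto
        also have "\<dots> < s / (1 + s) * h s"
        proof (rule mult_strict_right_mono)
          show "r / (1 + r) < s / (1 + s)" using r0 rs(3) by (simp add: field_simps)
          show "0 < h s" by (rule h_pos[OF s0])
        qed
        finally show ?thesis by (simp add: \<alpha>_def)
      qed
    qed
    show "\<alpha> 0 = 0" by (simp add: \<alpha>_def)
    fix s :: real assume "s \<ge> 0"
    then show "\<alpha> s \<ge> 0" unfolding \<alpha>_def using h_nonneg by simp
  qed
  moreover have "\<forall>s>0. P s (\<alpha> s)"
  proof (intro allI impI)
    fix s :: real assume s: "s > 0"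
    have "\<alpha> s > 0" unfolding \<alpha>_def using s h_pos[OF s] by simp
    moreover have "\<alpha> s \<le> h s"
    proof -
      have "s / (1 + s) \<le> 1" using s by simp
      then show ?thesis unfolding \<alpha>_def using h_nonneg[of s] mult_right_mono[of "s / (1 + s)" 1 "h s"] by simp
    qed
    then have "\<alpha> s < m s" using h_lt[OF s] by simp
    ultimately show "P s (\<alpha> s)" using mprop[OF s] by blast
  qed
  ultimately show ?thesis by blast
qed

lemma main_generic:
  fixes x :: "real \<times> nat \<Rightarrow> 'a::euclidean_space"
  assumes aK: "classK \<alpha>" and ale: "\<forall>s>0. \<alpha> s \<le> s"
    and win: "\<And>t1. t1 > 0 \<Longrightarrow> (\<And>t. (t,0) \<in> E \<longleftrightarrow> t \<in> {0..t1}) \<Longrightarrow> infdist (x (0,0)) A > 0 \<Longrightarrow>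
        infdist (x (t1,0)) A < \<alpha> (infdist (x (0,0)) A) \<Longrightarrow>
        \<exists>\<tau>1 \<tau>2. 0 \<le> \<tau>1 \<and> \<tau>1 \<le> \<tau>2 \<and> \<tau>2 \<le> t1 \<and> \<tau>2 - \<tau>1 \<ge> \<alpha> (infdist (x (0,0)) A) \<and>
          (\<forall>t\<in>{\<tau>1..\<tau>2}. infdist (x (t,0)) A \<ge> \<alpha> (infdist (x (0,0)) A))"
    and feas: "feasible C f D g \<T> X E x u"
  shows "P2 A \<alpha> E x \<or> P3 A \<alpha> E x \<or> P4 A \<alpha> E x"
proof (rule ccontr)
  assume H: "\<not> (P2 A \<alpha> E x \<or> P3 A \<alpha> E x \<or> P4 A \<alpha> E x)"
  define d0 where "d0 = infdist (x (0,0)) A"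
  have "d0 \<noteq> 0"
  proof
    assume "d0 = 0"
    then have "P4 A \<alpha> E x" using aK unfolding P4_def classK_def d0_def by (simp add: infdist_nonneg)
    then show False using H by simp
  qed
  then have d0: "d0 > 0" using infdist_nonneg[of "x (0,0)" A] d0_def by simp
  have "\<alpha> d0 \<le> d0" using ale d0 by simp
  then obtain t1 where t1: "t1 > 0" and mem0: "\<And>t. (t, 0) \<in> E \<longleftrightarrow> t \<in> {0..t1}"
    and memi: "\<And>s i. (s, i) \<in> E \<Longrightarrow> i \<ge> 1 \<Longrightarrow> t1 \<le> s"
    and lt: "infdist (x (t1, 0)) A < \<alpha> d0"
    using hybrid_first_segment[OF feas, of A \<alpha>] H d0_def by blast
  obtain \<tau>1 \<tau>2 where w: "0 \<le> \<tau>1" "\<tau>1 \<le> \<tau>2" "\<tau>2 \<le> t1" "\<tau>2 - \<tau>1 \<ge> \<alpha> d0"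
    and bnd: "\<forall>t\<in>{\<tau>1..\<tau>2}. infdist (x (t,0)) A \<ge> \<alpha> d0"
    using win[OF t1 mem0] d0 lt d0_def by blast
  have "P2 A \<alpha> E x"
    by (rule P2_from_window[OF mem0 memi w(1-3)]) (use w bnd d0_def in auto)
  then show False using H by simp
qed

lemma segment_facts:
  fixes x :: "real \<times> nat \<Rightarrow> 'a::euclidean_space"
  assumes feas: "feasible C f D g \<T> X E x u" and t1: "t1 > 0"
    and mem0: "\<And>t. (t,0) \<in> E \<longleftrightarrow> t \<in> {0..t1}"
  obtains N where "N \<in> null_sets lebesgue"
    "\<And>a b. 0 \<le> a \<Longrightarrow> a \<le> b \<Longrightarrow> b \<le> t1 \<Longrightarrow> abs_continuous_on a b (\<lambda>t. x (t,0))"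
    "\<And>t. t \<in> {0..t1} \<Longrightarrow> t \<notin> N \<Longrightarrow> (x (t,0), u (t,0)) \<in> C \<and>
        ((\<lambda>s. x (s,0)) has_vector_derivative f (x (t,0), u (t,0))) (at t)"
proof -
  have Ij: "Ij E 0 = {0..t1}"
  proof (rule set_eqI)
    fix t show "t \<in> Ij E 0 \<longleftrightarrow> t \<in> {0..t1}" unfolding Ij_def mem_Collect_eq by (rule mem0)
  qed
  have "interior (Ij E 0) = {0<..<t1}" by (simp only: Ij interior_atLeastAtMost_real)
  moreover have "t1 / 2 \<in> {0<..<t1}" using t1 by simp
  ultimately have int: "interior (Ij E 0) \<noteq> {}" by blast
  have sp: "solution_pair C f D g E x u" using feas unfolding feasible_def by (rule conjunct1)
  have all: "\<forall>j. interior (Ij E j) \<noteq> {} \<longrightarrow>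
         loc_abs_continuous_on (Ij E j) (\<lambda>t. x (t, j))
       \<and> (\<lambda>t. u (t, j)) \<in> borel_measurable (lebesgue_on (interior (Ij E j)))
       \<and> loc_ess_bounded_on (interior (Ij E j)) (\<lambda>t. u (t, j))
       \<and> (AE t in lebesgue. t \<in> Ij E j \<longrightarrow>
            (x (t, j), u (t, j)) \<in> C \<and>
            ((\<lambda>s. x (s, j)) has_vector_derivative f (x (t, j), u (t, j))) (at t))"
    using sp unfolding solution_pair_def by (elim conjE)
  note j0 = all[rule_format, OF int, unfolded Ij]
  have lac: "loc_abs_continuous_on {0..t1} (\<lambda>t. x (t, 0))" using j0 by (rule conjunct1)
  have ae: "AE t in lebesgue. t \<in> {0..t1} \<longrightarrow> (x (t, 0), u (t, 0)) \<in> C \<and>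
            ((\<lambda>s. x (s, 0)) has_vector_derivative f (x (t, 0), u (t, 0))) (at t)"
    using j0 by (elim conjE)
  from ae obtain N where N: "{t \<in> space lebesgue. \<not> (t \<in> {0..t1} \<longrightarrow> (x (t, 0), u (t, 0)) \<in> C \<and>
            ((\<lambda>s. x (s, 0)) has_vector_derivative f (x (t, 0), u (t, 0))) (at t))} \<subseteq> N"
    "emeasure lebesgue N = 0" "N \<in> sets lebesgue"
    by (rule AE_E)
  show ?thesis
  proof (rule that)
    show "N \<in> null_sets lebesgue" using N by (simp add: null_sets_def)
    show "\<And>a b. 0 \<le> a \<Longrightarrow> a \<le> b \<Longrightarrow> b \<le> t1 \<Longrightarrow> abs_continuous_on a b (\<lambda>t. x (t,0))"
      using lac unfolding loc_abs_continuous_on_def by auto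
    show "\<And>t. t \<in> {0..t1} \<Longrightarrow> t \<notin> N \<Longrightarrow> (x (t,0), u (t,0)) \<in> C \<and>
        ((\<lambda>s. x (s,0)) has_vector_derivative f (x (t,0), u (t,0))) (at t)"
      using N(1) by auto
  qed
qed

lemma case_ii:
  fixes C D :: "('a::euclidean_space \<times> 'b::euclidean_space) set"
    and f g :: "'a \<times> 'b \<Rightarrow> 'a"
  assumes \<sigma>c: "continuous_on {0<..} \<sigma>" and \<sigma>0: "\<forall>s>0. \<sigma> s \<ge> 0" and \<epsilon>: "\<epsilon> > 0"
    and fb: "\<forall>z w. (z, w) \<in> C \<and> 0 < infdist z A \<and> infdist z A \<le> \<epsilon> \<longrightarrow> norm (f (z, w)) \<le> \<sigma> (infdist z A)"
  shows "\<exists>\<alpha>. classK \<alpha> \<and>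
           (\<forall>E x u. feasible C f D g \<T> X E x u \<longrightarrow> P2 A \<alpha> E x \<or> P3 A \<alpha> E x \<or> P4 A \<alpha> E x)"
proof -
  define P where "P s a \<longleftrightarrow> (\<exists>c. 0 < a \<and> a \<le> c \<and> 0 < c \<and> c < min s \<epsilon> \<and>
      (\<forall>r\<in>{c..\<epsilon>}. a * (1 + \<sigma> r) \<le> min s \<epsilon> - c))" for s a
  obtain \<alpha> where aK: "classK \<alpha>" and aP: "\<forall>s>0. P s (\<alpha> s)"
  proof -
    have "\<exists>\<alpha>. classK \<alpha> \<and> (\<forall>s>0. P s (\<alpha> s))"
    proof (rule classK_exists[of P])
      fix s a b assume s: "s > 0" and Pa: "P s a" and b: "0 < b" "b \<le> a"
      then obtain c where c: "0 < a" "a \<le> c" "0 < c" "c < min s \<epsilon>"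
        "\<forall>r\<in>{c..\<epsilon>}. a * (1 + \<sigma> r) \<le> min s \<epsilon> - c" unfolding P_def by blast
      have "\<forall>r\<in>{c..\<epsilon>}. b * (1 + \<sigma> r) \<le> min s \<epsilon> - c"
      proof
        fix r assume r: "r \<in> {c..\<epsilon>}"
        have "1 + \<sigma> r \<ge> 0" using \<sigma>0 r c(3) by force
        then have "b * (1 + \<sigma> r) \<le> a * (1 + \<sigma> r)" using b by (intro mult_right_mono) auto
        then show "b * (1 + \<sigma> r) \<le> min s \<epsilon> - c" using c(5) r by fastforce
      qed
      then show "P s b" unfolding P_def using b c by (intro exI[of _ c]) auto
    next
      fix s s' a assume s: "0 < s" "s \<le> s'" and Pa: "P s a"
      then obtain c where c: "0 < a" "a \<le> c" "0 < c" "c < min s \<epsilon>"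
        "\<forall>r\<in>{c..\<epsilon>}. a * (1 + \<sigma> r) \<le> min s \<epsilon> - c" unfolding P_def by blast
      have "min s \<epsilon> \<le> min s' \<epsilon>" using s by simp
      then show "P s' a" unfolding P_def using c by (intro exI[of _ c]) fastforce
    next
      fix s :: real assume s: "s > 0"
      define d1 where "d1 = min s \<epsilon>"
      have d1: "d1 > 0" using s \<epsilon> d1_def by simp
      define c where "c = d1 / 2"
      have "{c..\<epsilon>} \<subseteq> {0<..}" using d1 c_def by auto
      then have "continuous_on {c..\<epsilon>} \<sigma>" using \<sigma>c continuous_on_subset by blast
      then have "compact (\<sigma> ` {c..\<epsilon>})" by (rule compact_continuous_image[OF _ compact_Icc])
      then obtain B where B: "\<forall>y\<in>\<sigma> ` {c..\<epsilon>}. norm y \<le> B" using compact_imp_bounded bounded_iff by metis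
      define B' where "B' = max B 0"
      have B': "\<And>r. r \<in> {c..\<epsilon>} \<Longrightarrow> \<sigma> r \<le> B'" "B' \<ge> 0" using B B'_def by force+
      define a where "a = min c ((d1 - c) / (1 + B'))"
      have cpos: "c > 0" "d1 - c > 0" using d1 c_def by auto
      have apos: "a > 0" using cpos B' a_def by simp
      have "\<forall>r\<in>{c..\<epsilon>}. a * (1 + \<sigma> r) \<le> d1 - c"
      proof
        fix r assume r: "r \<in> {c..\<epsilon>}"
        have "1 + \<sigma> r \<ge> 0" using \<sigma>0 r cpos by force
        have "a * (1 + \<sigma> r) \<le> (d1 - c) / (1 + B') * (1 + \<sigma> r)"
          using \<open>1 + \<sigma> r \<ge> 0\<close> a_def by (intro mult_right_mono) auto
        also have "\<dots> \<le> (d1 - c) / (1 + B') * (1 + B')"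
          using B'(1)[OF r] cpos B'(2) by (intro mult_left_mono) auto
        also have "\<dots> = d1 - c" using B'(2) by simp
        finally show "a * (1 + \<sigma> r) \<le> d1 - c" .
      qed
      then have R: "\<forall>r\<in>{c..\<epsilon>}. a * (1 + \<sigma> r) \<le> min s \<epsilon> - c" using d1_def by simp
      have "a \<le> c" using a_def by simp
      moreover have "c < min s \<epsilon>" using cpos(2) d1_def by simp
      ultimately have "P s a" unfolding P_def using apos cpos(1) R by blast
      then show "\<exists>a>0. P s a" using apos by blast
    qed
    then show ?thesis using that by blast
  qed
  have ale: "\<forall>s>0. \<alpha> s \<le> s"
  proof (intro allI impI)
    fix s :: real assume "s > 0"
    then show "\<alpha> s \<le> s" using aP unfolding P_def by force
  qed
  show ?thesis
  proof (intro exI[of _ \<alpha>] conjI allI impI)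
    show "classK \<alpha>" by (rule aK)
    fix E x u assume feas: "feasible C f D g \<T> X E x u"
    show "P2 A \<alpha> E x \<or> P3 A \<alpha> E x \<or> P4 A \<alpha> E x"
    proof (rule main_generic[OF aK ale _ feas])
      fix t1 :: real
      assume t1: "t1 > 0" and mem0: "\<And>t. (t,0) \<in> E \<longleftrightarrow> t \<in> {0..t1}"
        and d0pos: "infdist (x (0,0)) A > 0" and lt: "infdist (x (t1,0)) A < \<alpha> (infdist (x (0,0)) A)"
      define d0 where "d0 = infdist (x (0,0)) A"
      define a where "a = \<alpha> d0"
      have d0: "d0 > 0" using d0pos d0_def by simp
      obtain c where c: "0 < a" "a \<le> c" "0 < c" "c < min d0 \<epsilon>"
        "\<forall>r\<in>{c..\<epsilon>}. a * (1 + \<sigma> r) \<le> min d0 \<epsilon> - c"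
        using aP d0 unfolding P_def a_def by blast
      define d1 where "d1 = min d0 \<epsilon>"
      obtain N where N: "N \<in> null_sets lebesgue"
        and ac: "\<And>a b. 0 \<le> a \<Longrightarrow> a \<le> b \<Longrightarrow> b \<le> t1 \<Longrightarrow> abs_continuous_on a b (\<lambda>t. x (t,0))"
        and der: "\<And>t. t \<in> {0..t1} \<Longrightarrow> t \<notin> N \<Longrightarrow> (x (t,0), u (t,0)) \<in> C \<and>
          ((\<lambda>s. x (s,0)) has_vector_derivative f (x (t,0), u (t,0))) (at t)"
        using segment_facts[OF feas t1 mem0] by blast
      define \<delta> where "\<delta> t = infdist (x (t,0)) A" for t
      have cont: "continuous_on {0..t1} \<delta>"
        unfolding \<delta>_def using ac_continuous[OF ac[of 0 t1]] t1 by (intro continuous_on_infdist) auto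
      obtain \<tau>1 \<tau>2 where \<tau>: "0 \<le> \<tau>1" "\<tau>1 < \<tau>2" "\<tau>2 \<le> t1" "\<delta> \<tau>1 = d1" "\<delta> \<tau>2 = c"
        and win: "\<forall>t\<in>{\<tau>1..\<tau>2}. c \<le> \<delta> t \<and> \<delta> t \<le> d1"
      proof (rule crossing[OF cont])
        show "0 \<le> t1" using t1 by simp
        show "d1 \<le> \<delta> 0" using d0_def d1_def \<delta>_def by simp
        show "\<delta> t1 < c" using lt c \<delta>_def d0_def a_def by simp
        show "c < d1" using c d1_def by simp
      qed
      define M where "M = (d1 - c) / a - 1"
      have M0: "M \<ge> 0"
      proof -
        have "c \<in> {c..\<epsilon>}" using c by simp
        then have "a * (1 + \<sigma> c) \<le> d1 - c" using c(5) d1_def by blast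
        moreover have "\<sigma> c \<ge> 0" using \<sigma>0 c by simp
        moreover have "a * \<sigma> c \<ge> 0" using c(1) \<open>\<sigma> c \<ge> 0\<close> by simp
        ultimately have "a \<le> d1 - c" by (simp add: distrib_left)
        then show ?thesis using c(1) M_def by simp
      qed
      have lip: "norm (x (\<tau>2,0) - x (\<tau>1,0)) \<le> M * (\<tau>2 - \<tau>1)"
      proof (rule ac_lip_bound[OF _ ac[of \<tau>1 \<tau>2] N M0])
        show "\<tau>1 \<le> \<tau>2" using \<tau> by simp
        show "0 \<le> \<tau>1" "\<tau>1 \<le> \<tau>2" "\<tau>2 \<le> t1" using \<tau> by auto
        fix t assume t: "t \<in> {\<tau>1<..<\<tau>2}" "t \<notin> N"
        then have t0: "t \<in> {0..t1}" using \<tau> by auto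
        have dt: "c \<le> \<delta> t" "\<delta> t \<le> d1" using win t by auto
        have Cm: "(x (t,0), u (t,0)) \<in> C" using der[OF t0 t(2)] by blast
        have "norm (f (x (t,0), u (t,0))) \<le> \<sigma> (\<delta> t)"
          using fb Cm dt c d1_def unfolding \<delta>_def by force
        moreover have "a * (1 + \<sigma> (\<delta> t)) \<le> d1 - c" using c(5) dt d1_def by force
        then have "\<sigma> (\<delta> t) \<le> M" unfolding M_def using c(1) by (simp add: field_simps)
        ultimately show "\<exists>v. ((\<lambda>s. x (s,0)) has_vector_derivative v) (at t) \<and> norm v \<le> M"
          using der[OF t0 t(2)] by force
      qed
      have "d1 - c \<le> norm (x (\<tau>2,0) - x (\<tau>1,0))"
        using infdist_triangle[of "x (\<tau>1,0)" A "x (\<tau>2,0)"] \<tau> unfolding \<delta>_def by (simp add: dist_norm norm_minus_commute)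
      then have ineq: "d1 - c \<le> M * (\<tau>2 - \<tau>1)" using lip by simp
      have "a \<le> \<tau>2 - \<tau>1"
      proof (rule ccontr)
        assume "\<not> a \<le> \<tau>2 - \<tau>1"
        then have "\<tau>2 - \<tau>1 < a" by simp
        have "M * (\<tau>2 - \<tau>1) \<le> ((d1 - c) / a) * (\<tau>2 - \<tau>1)" unfolding M_def using \<tau> by (intro mult_right_mono) auto
        also have "\<dots> < ((d1 - c) / a) * a"
          using \<open>\<tau>2 - \<tau>1 < a\<close> c d1_def by (intro mult_strict_left_mono) auto
        also have "\<dots> = d1 - c" using c(1) by simp
        finally show False using ineq by simp
      qed
      then show "\<exists>\<tau>1 \<tau>2. 0 \<le> \<tau>1 \<and> \<tau>1 \<le> \<tau>2 \<and> \<tau>2 \<le> t1 \<and> \<tau>2 - \<tau>1 \<ge> \<alpha> (infdist (x (0,0)) A) \<and>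
          (\<forall>t\<in>{\<tau>1..\<tau>2}. infdist (x (t,0)) A \<ge> \<alpha> (infdist (x (0,0)) A))"
        using \<tau> win c unfolding a_def d0_def \<delta>_def
        by (intro exI[of _ \<tau>1] exI[of _ \<tau>2]) force
    qed
  qed
qed

lemma dense_good:
  fixes N :: "real set"
  assumes t1: "t1 > 0" and N: "N \<in> null_sets lebesgue"
  shows "{0..t1} \<subseteq> closure ({0<..<t1} - N)"
proof
  fix t assume t: "t \<in> {0..t1}"
  show "t \<in> closure ({0<..<t1} - N)"
    unfolding closure_approachable
  proof (intro allI impI)
    fix e :: real assume e: "e > 0"
    have "t \<in> closure {0<..<t1}" using t t1 by simp
    then obtain y0 where y0: "y0 \<in> {0<..<t1}" "dist y0 t < e" using e unfolding closure_approachable by blast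
    define S where "S = ball t e \<inter> {0<..<t1}"
    have "open S" unfolding S_def by auto
    moreover have "y0 \<in> S" using y0 unfolding S_def by (simp add: dist_commute)
    ultimately have nn: "\<not> negligible S" using open_not_negligible by blast
    have "negligible N" using N negligible_iff_null_sets by blast
    then have "\<not> S \<subseteq> N" using nn negligible_subset by blast
    then obtain y where "y \<in> S" "y \<notin> N" by blast
    then show "\<exists>y\<in>{0<..<t1} - N. dist y t < e" unfolding S_def by (auto simp: dist_commute)
  qed
qed

lemma closure_sandwich:
  fixes Vt :: "'a::euclidean_space \<Rightarrow> real" and C :: "('a \<times> 'b) set"
  assumes U: "closure (fst ` C) \<subseteq> U"
    and dV: "\<forall>z\<in>U. (Vt has_derivative (\<lambda>h. G z \<bullet> h)) (at z)"
    and a1: "classK \<alpha>1" and a2: "classK \<alpha>2"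
    and sand: "\<forall>z\<in>fst ` C. infdist z A \<le> \<epsilon> \<longrightarrow> \<alpha>1 (infdist z A) \<le> Vt z \<and> Vt z \<le> \<alpha>2 (infdist z A)"
    and z: "z \<in> closure (fst ` C)" "infdist z A < \<epsilon>"
  shows "\<alpha>1 (infdist z A) \<le> Vt z \<and> Vt z \<le> \<alpha>2 (infdist z A)"
proof -
  define O' where "O' = {z. infdist z A < \<epsilon>}"
  have "open O'" unfolding O'_def
    by (rule open_Collect_less) (auto intro: continuous_on_infdist continuous_on_id)
  define S' where "S' = O' \<inter> fst ` C"
  have zS: "z \<in> closure S'" using open_Int_closure_subset[OF \<open>open O'\<close>, of "fst ` C"] z O'_def S'_def by blast
  have cS: "closure S' \<subseteq> U" using U closure_mono[of S' "fst ` C"] S'_def by blast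
  have cV: "continuous_on (closure S') Vt"
    by (rule continuous_at_imp_continuous_on) (use cS dV has_derivative_continuous in blast)
  have cA: "continuous_on (closure S') (\<lambda>z. \<alpha> (infdist z A))" if "classK \<alpha>" for \<alpha>
  proof (rule continuous_on_compose2[of "{0..}" \<alpha>])
    show "continuous_on {0..} \<alpha>" using that by (simp add: classK_def)
    show "continuous_on (closure S') (\<lambda>z. infdist z A)" by (intro continuous_on_infdist continuous_on_id)
    show "(\<lambda>z. infdist z A) ` closure S' \<subseteq> {0..}" by (auto simp: infdist_nonneg)
  qed
  have "(\<lambda>z. Vt z - \<alpha>1 (infdist z A)) z \<ge> 0"
  proof (rule continuous_ge_on_closure[of S' "\<lambda>z. Vt z - \<alpha>1 (infdist z A)" z 0])
    show "continuous_on (closure S') (\<lambda>z. Vt z - \<alpha>1 (infdist z A))"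
      by (intro continuous_on_diff cV cA a1)
    show "z \<in> closure S'" by (rule zS)
    fix y assume "y \<in> S'"
    then show "(\<lambda>z. Vt z - \<alpha>1 (infdist z A)) y \<ge> 0" using sand unfolding S'_def O'_def by force
  qed
  moreover have "(\<lambda>z. \<alpha>2 (infdist z A) - Vt z) z \<ge> 0"
  proof (rule continuous_ge_on_closure[of S' "\<lambda>z. \<alpha>2 (infdist z A) - Vt z" z 0])
    show "continuous_on (closure S') (\<lambda>z. \<alpha>2 (infdist z A) - Vt z)"
      by (intro continuous_on_diff cV cA a2)
    show "z \<in> closure S'" by (rule zS)
    fix y assume "y \<in> S'"
    then show "(\<lambda>z. \<alpha>2 (infdist z A) - Vt z) y \<ge> 0" using sand unfolding S'_def O'_def by force
  qed
  ultimately show ?thesis by simp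
qed

lemma case_i:
  fixes C D :: "('a::euclidean_space \<times> 'b::euclidean_space) set"
    and f g :: "'a \<times> 'b \<Rightarrow> 'a" and Vt :: "'a \<Rightarrow> real" and G :: "'a \<Rightarrow> 'a"
  assumes Vt0: "\<forall>z. Vt z \<ge> 0" and U: "open U" "closure (fst ` C) \<subseteq> U"
    and dV: "\<forall>z\<in>U. (Vt has_derivative (\<lambda>h. G z \<bullet> h)) (at z)" and cG: "continuous_on U G"
    and a1: "classK \<alpha>1" and a2: "classK \<alpha>2" and \<epsilon>: "\<epsilon> > 0"
    and sand: "\<forall>z\<in>fst ` C. infdist z A \<le> \<epsilon> \<longrightarrow> \<alpha>1 (infdist z A) \<le> Vt z \<and> Vt z \<le> \<alpha>2 (infdist z A)"
    and flow: "\<forall>z w. (z, w) \<in> C \<and> infdist z A \<le> \<epsilon> \<longrightarrow> G z \<bullet> f (z, w) \<ge> lam * Vt z"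
  shows "\<exists>\<alpha>. classK \<alpha> \<and>
           (\<forall>E x u. feasible C f D g \<T> X E x u \<longrightarrow> P2 A \<alpha> E x \<or> P3 A \<alpha> E x \<or> P4 A \<alpha> E x)"
proof -
  define K0 where "K0 = \<bar>lam\<bar> * \<alpha>2 \<epsilon> + 1"
  have a2e: "\<alpha>2 \<epsilon> \<ge> 0" using a2 \<epsilon> unfolding classK_def by simp
  have K0: "K0 \<ge> 1" using a2e K0_def by simp
  define P where "P s a \<longleftrightarrow> (\<exists>c. 0 < a \<and> a \<le> c \<and> 0 < c \<and> c < min s (\<epsilon>/2) \<and>
      \<alpha>2 c \<le> \<alpha>1 (min s (\<epsilon>/2)) / 2 \<and> a * K0 \<le> \<alpha>1 (min s (\<epsilon>/2)) / 2)" for s a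
  obtain \<alpha> where aK: "classK \<alpha>" and aP: "\<forall>s>0. P s (\<alpha> s)"
  proof -
    have "\<exists>\<alpha>. classK \<alpha> \<and> (\<forall>s>0. P s (\<alpha> s))"
    proof (rule classK_exists[of P])
      fix s a b assume s: "s > 0" and Pa: "P s a" and b: "0 < b" "b \<le> a"
      from Pa obtain c where c: "0 < a" "a \<le> c" "0 < c" "c < min s (\<epsilon>/2)"
        "\<alpha>2 c \<le> \<alpha>1 (min s (\<epsilon>/2)) / 2" "a * K0 \<le> \<alpha>1 (min s (\<epsilon>/2)) / 2"
        unfolding P_def by blast
      have "b * K0 \<le> a * K0" using b K0 by (intro mult_right_mono) auto
      then have "b * K0 \<le> \<alpha>1 (min s (\<epsilon>/2)) / 2" using c(6) by linarith
      moreover have "b \<le> c" using b c by linarith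
      ultimately show "P s b" unfolding P_def using b(1) c(3,4,5) by blast
    next
      fix s s' a assume s: "0 < s" "s \<le> s'" and Pa: "P s a"
      from Pa obtain c where c: "0 < a" "a \<le> c" "0 < c" "c < min s (\<epsilon>/2)"
        "\<alpha>2 c \<le> \<alpha>1 (min s (\<epsilon>/2)) / 2" "a * K0 \<le> \<alpha>1 (min s (\<epsilon>/2)) / 2"
        unfolding P_def by blast
      have mm: "min s (\<epsilon>/2) \<le> min s' (\<epsilon>/2)" using s by (auto simp: min_def)
      have "0 \<le> min s (\<epsilon>/2)" using s \<epsilon> by simp
      then have "\<alpha>1 (min s (\<epsilon>/2)) \<le> \<alpha>1 (min s' (\<epsilon>/2))" using classK_mono[OF a1 _ mm] by simp
      then have "\<alpha>2 c \<le> \<alpha>1 (min s' (\<epsilon>/2)) / 2" "a * K0 \<le> \<alpha>1 (min s' (\<epsilon>/2)) / 2" "c < min s' (\<epsilon>/2)"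
        using c mm by linarith+
      then show "P s' a" unfolding P_def using c(1,2,3) by blast
    next
      fix s :: real assume s: "s > 0"
      define m where "m = min s (\<epsilon>/2)"
      have m: "m > 0" using s \<epsilon> m_def by simp
      have sm1: "strict_mono_on {0..} \<alpha>1" "\<alpha>1 0 = 0" using a1 by (auto simp: classK_def)
      have am: "\<alpha>1 m > 0" using strict_mono_onD[OF sm1(1), of 0 m] m sm1(2) by simp
      have "continuous_on {0..} \<alpha>2" using a2 by (simp add: classK_def)
      then obtain d where d: "d > 0" and dH: "\<forall>x'\<in>{0..}. dist x' 0 < d \<longrightarrow> dist (\<alpha>2 x') (\<alpha>2 0) < \<alpha>1 m / 2"
        unfolding continuous_on_iff using am by (metis atLeast_iff half_gt_zero order_refl)
      define c where "c = min (d/2) (m/2)"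
      have c: "c > 0" "c < m" using d m c_def by auto
      have "dist (\<alpha>2 c) (\<alpha>2 0) < \<alpha>1 m / 2" using dH c d c_def by (simp add: dist_real_def)
      then have a2c: "\<alpha>2 c \<le> \<alpha>1 m / 2" using a2 by (simp add: classK_def dist_real_def)
      define a where "a = min c (\<alpha>1 m / (2 * K0))"
      have apos: "a > 0" using c am K0 a_def by simp
      have "a * K0 \<le> (\<alpha>1 m / (2 * K0)) * K0" using K0 a_def by (intro mult_right_mono) auto
      also have "\<dots> = \<alpha>1 m / 2" using K0 by simp
      finally have "a * K0 \<le> \<alpha>1 m / 2" .
      moreover have "a \<le> c" using a_def by simp
      ultimately have "P s a" unfolding P_def using apos c a2c m_def by blast
      then show "\<exists>a>0. P s a" using apos by blast
    qed
    then show ?thesis using that by blast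
  qed
  have ale: "\<forall>s>0. \<alpha> s \<le> s"
  proof (intro allI impI)
    fix s :: real assume "s > 0"
    then obtain c where "\<alpha> s \<le> c" "c < min s (\<epsilon>/2)" using aP unfolding P_def by blast
    then show "\<alpha> s \<le> s" by simp
  qed
  show ?thesis
  proof (intro exI[of _ \<alpha>] conjI allI impI)
    show "classK \<alpha>" by (rule aK)
    fix E x u assume feas: "feasible C f D g \<T> X E x u"
    show "P2 A \<alpha> E x \<or> P3 A \<alpha> E x \<or> P4 A \<alpha> E x"
    proof (rule main_generic[OF aK ale _ feas])
      fix t1 :: real
      assume t1: "t1 > 0" and mem0: "\<And>t. (t,0) \<in> E \<longleftrightarrow> t \<in> {0..t1}"
        and d0pos: "infdist (x (0,0)) A > 0" and lt: "infdist (x (t1,0)) A < \<alpha> (infdist (x (0,0)) A)"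
      define d0 where "d0 = infdist (x (0,0)) A"
      define a where "a = \<alpha> d0"
      have d0: "d0 > 0" using d0pos d0_def by simp
      define d1 where "d1 = min d0 (\<epsilon>/2)"
      obtain c where c: "0 < a" "a \<le> c" "0 < c" "c < d1"
        "\<alpha>2 c \<le> \<alpha>1 d1 / 2" "a * K0 \<le> \<alpha>1 d1 / 2"
        using aP d0 unfolding P_def a_def d1_def by blast
      obtain N where N: "N \<in> null_sets lebesgue"
        and ac: "\<And>a b. 0 \<le> a \<Longrightarrow> a \<le> b \<Longrightarrow> b \<le> t1 \<Longrightarrow> abs_continuous_on a b (\<lambda>t. x (t,0))"
        and der: "\<And>t. t \<in> {0..t1} \<Longrightarrow> t \<notin> N \<Longrightarrow> (x (t,0), u (t,0)) \<in> C \<and>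
          ((\<lambda>s. x (s,0)) has_vector_derivative f (x (t,0), u (t,0))) (at t)"
        using segment_facts[OF feas t1 mem0] by blast
      define \<delta> where "\<delta> t = infdist (x (t,0)) A" for t
      have contX: "continuous_on {0..t1} (\<lambda>t. x (t,0))" using ac_continuous[OF ac[of 0 t1]] t1 by simp
      have cont: "continuous_on {0..t1} \<delta>"
        unfolding \<delta>_def using contX by (intro continuous_on_infdist) auto
      obtain \<tau>1 \<tau>2 where \<tau>: "0 \<le> \<tau>1" "\<tau>1 < \<tau>2" "\<tau>2 \<le> t1" "\<delta> \<tau>1 = d1" "\<delta> \<tau>2 = c"
        and win: "\<forall>t\<in>{\<tau>1..\<tau>2}. c \<le> \<delta> t \<and> \<delta> t \<le> d1"
      proof (rule crossing[OF cont])
        show "0 \<le> t1" using t1 by simp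
        show "d1 \<le> \<delta> 0" using d0_def d1_def \<delta>_def by simp
        show "\<delta> t1 < c" using lt c \<delta>_def d0_def a_def by simp
        show "c < d1" using c by simp
      qed
      have d1e: "d1 \<le> \<epsilon>/2" using d1_def by simp
      have inC: "x (t,0) \<in> closure (fst ` C)" if t: "t \<in> {0..t1}" for t
      proof -
        define Gd where "Gd = {0<..<t1} - N"
        have cG: "closure Gd \<subseteq> {0..t1}"
        proof -
          have "closure Gd \<subseteq> closure {0<..<t1}" unfolding Gd_def by (rule closure_mono) auto
          then show ?thesis using t1 by simp
        qed
        have "(\<lambda>t. x (t,0)) ` closure Gd \<subseteq> closure (fst ` C)"
        proof (rule image_closure_subset)
          show "continuous_on (closure Gd) (\<lambda>t. x (t,0))" using contX cG continuous_on_subset by blast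
          show "closed (closure (fst ` C))" by simp
          show "(\<lambda>t. x (t,0)) ` Gd \<subseteq> closure (fst ` C)"
          proof
            fix y assume "y \<in> (\<lambda>t. x (t,0)) ` Gd"
            then obtain s where s: "s \<in> Gd" "y = x (s,0)" by blast
            then have "(x (s,0), u (s,0)) \<in> C" using der[of s] Gd_def by auto
            then have "y \<in> fst ` C" using s(2) by force
            then show "y \<in> closure (fst ` C)" using closure_subset by blast
          qed
        qed
        moreover have "t \<in> closure Gd" using dense_good[OF t1 N] t Gd_def by blast
        ultimately show ?thesis by blast
      qed
      have W1: "\<alpha>1 d1 \<le> Vt (x (\<tau>1,0))"
      proof -
        have "\<tau>1 \<in> {0..t1}" using \<tau> by simp
        moreover have "infdist (x (\<tau>1,0)) A < \<epsilon>" using \<tau>(4) d1e \<epsilon> \<delta>_def by simp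
        ultimately have "\<alpha>1 (infdist (x (\<tau>1,0)) A) \<le> Vt (x (\<tau>1,0))"
          using closure_sandwich[OF U(2) dV a1 a2 sand inC] by blast
        moreover have "infdist (x (\<tau>1,0)) A = d1" using \<tau>(4) \<delta>_def by simp
        ultimately show ?thesis by simp
      qed
      have W2: "Vt (x (\<tau>2,0)) \<le> \<alpha>2 c"
      proof -
        have "\<tau>2 \<in> {0..t1}" using \<tau> by simp
        moreover have "infdist (x (\<tau>2,0)) A < \<epsilon>" using \<tau>(5) c(4) d1e \<epsilon> \<delta>_def by simp
        ultimately have "Vt (x (\<tau>2,0)) \<le> \<alpha>2 (infdist (x (\<tau>2,0)) A)"
          using closure_sandwich[OF U(2) dV a1 a2 sand inC] by blast
        moreover have "infdist (x (\<tau>2,0)) A = c" using \<tau>(5) \<delta>_def by simp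
        ultimately show ?thesis by simp
      qed
      have acX: "abs_continuous_on \<tau>1 \<tau>2 (\<lambda>t. x (t,0))" using ac \<tau> by simp
      have XU: "(\<lambda>t. x (t,0)) ` {\<tau>1..\<tau>2} \<subseteq> U" using inC U(2) \<tau> by force
      have acW: "abs_continuous_on \<tau>1 \<tau>2 (\<lambda>t. Vt (x (t,0)))"
        by (rule ac_compose[OF acX U(1) XU dV cG])
      define \<psi> where "\<psi> t = Vt (x (t,0)) + K0 * t" for t
      have acP: "abs_continuous_on \<tau>1 \<tau>2 \<psi>"
      proof (rule ac_dominated[OF acW zero_less_one _ zero_le_one])
        show "K0 \<ge> 0" using K0 by simp
        fix s r assume sr: "\<tau>1 \<le> s" "s \<le> r" "r \<le> \<tau>2"
        have "\<psi> r - \<psi> s = (Vt (x (r,0)) - Vt (x (s,0))) + K0 * (r - s)" unfolding \<psi>_def by (simp add: algebra_simps)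
        moreover have "K0 * (r - s) \<ge> 0" using K0 sr by simp
        ultimately show "norm (\<psi> r - \<psi> s) \<le> K0 * (r - s) + 1 * norm (Vt (x (r,0)) - Vt (x (s,0)))"
          by simp
      qed
      have "\<psi> \<tau>1 \<le> \<psi> \<tau>2"
      proof (rule ac_mono_core[OF _ acP N])
        show "\<tau>1 \<le> \<tau>2" using \<tau> by simp
        fix t assume t: "t \<in> {\<tau>1<..<\<tau>2}" "t \<notin> N"
        then have t0: "t \<in> {0..t1}" using \<tau> by auto
        define z where "z = x (t,0)"
        define w where "w = f (x (t,0), u (t,0))"
        have Cm: "(z, u (t,0)) \<in> C" and dX: "((\<lambda>s. x (s,0)) has_vector_derivative w) (at t)"
          using der[OF t0 t(2)] z_def w_def by auto
        have zC: "z \<in> fst ` C" using Cm by force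
        then have zU: "z \<in> U" using U(2) closure_subset by blast
        have dt: "c \<le> \<delta> t" "\<delta> t \<le> d1" using win t by auto
        have dte: "infdist z A \<le> \<epsilon>" using dt d1e \<epsilon> z_def \<delta>_def by simp
        have "((\<lambda>s. Vt (x (s,0))) has_derivative (\<lambda>h. G z \<bullet> (h *\<^sub>R w))) (at t)"
          using has_derivative_compose[of "\<lambda>s. x (s,0)" "\<lambda>h. h *\<^sub>R w" t UNIV Vt "\<lambda>h. G z \<bullet> h"]
            dX dV zU z_def by (simp add: has_vector_derivative_def)
        then have "(\<psi> has_derivative (\<lambda>h. G z \<bullet> (h *\<^sub>R w) + K0 * h)) (at t)"
          unfolding \<psi>_def by (intro has_derivative_add has_derivative_mult_right has_derivative_ident)
        moreover have "(\<lambda>h. G z \<bullet> (h *\<^sub>R w) + K0 * h) = (*) (G z \<bullet> w + K0)"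
          by (auto simp: fun_eq_iff algebra_simps)
        ultimately have D: "(\<psi> has_real_derivative (G z \<bullet> w + K0)) (at t)"
          by (simp add: has_field_derivative_def)
        have "G z \<bullet> w \<ge> lam * Vt z" using flow Cm dte w_def z_def by blast
        moreover have "lam * Vt z \<ge> - (\<bar>lam\<bar> * \<alpha>2 \<epsilon>)"
        proof -
          have V0: "Vt z \<ge> 0" using Vt0 by simp
          have "Vt z \<le> \<alpha>2 (infdist z A)" using sand zC dte by blast
          also have "\<dots> \<le> \<alpha>2 \<epsilon>" using classK_mono[OF a2 infdist_nonneg dte] .
          finally have "\<bar>lam\<bar> * Vt z \<le> \<bar>lam\<bar> * \<alpha>2 \<epsilon>" by (simp add: mult_left_mono)
          moreover have "- (\<bar>lam\<bar> * Vt z) \<le> lam * Vt z" using V0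
            by (cases "lam \<ge> 0") auto
          ultimately show ?thesis by linarith
        qed
        ultimately have "G z \<bullet> w + K0 \<ge> 0" unfolding K0_def by linarith
        then show "\<exists>D\<ge>0. (\<psi> has_real_derivative D) (at t)" using D by blast
      qed
      then have "Vt (x (\<tau>1,0)) - Vt (x (\<tau>2,0)) \<le> K0 * (\<tau>2 - \<tau>1)" unfolding \<psi>_def by (simp add: algebra_simps)
      then have "a * K0 \<le> K0 * (\<tau>2 - \<tau>1)" using W1 W2 c by linarith
      then have "a \<le> \<tau>2 - \<tau>1" using K0 by (simp add: mult.commute)
      then show "\<exists>\<tau>1 \<tau>2. 0 \<le> \<tau>1 \<and> \<tau>1 \<le> \<tau>2 \<and> \<tau>2 \<le> t1 \<and> \<tau>2 - \<tau>1 \<ge> \<alpha> (infdist (x (0,0)) A) \<and>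
          (\<forall>t\<in>{\<tau>1..\<tau>2}. infdist (x (t,0)) A \<ge> \<alpha> (infdist (x (0,0)) A))"
        using \<tau> win c unfolding a_def d0_def \<delta>_def
        by (intro exI[of _ \<tau>1] exI[of _ \<tau>2]) force
    qed
  qed
qed

theorem proposition5:
  fixes C D :: "('a::euclidean_space \<times> 'b::euclidean_space) set"
    and f g :: "'a \<times> 'b \<Rightarrow> 'a"
    and \<T> :: "(real \<times> nat) set"
    and L_C L_D :: "'a \<times> 'b \<Rightarrow> real"
    and V :: "'a \<Rightarrow> real"
    and X :: "'a set"
    and A :: "'a set"
  assumes "closed C"
    and "hybrid_prediction_horizon \<T>"
    and "X \<subseteq> fst ` (C \<union> D)"
    and "\<forall>z\<in>C. L_C z \<ge> 0" and "\<forall>z\<in>D. L_D z \<ge> 0" and "\<forall>z\<in>X. V z \<ge> 0"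
    and "closed A"
    and "(\<exists>(Vt :: 'a \<Rightarrow> real) (G :: 'a \<Rightarrow> 'a) (U :: 'a set) \<alpha>1 \<alpha>2 (lam::real) (\<epsilon>::real).
            (\<forall>z. Vt z \<ge> 0)
          \<and> open U \<and> closure (fst ` C) \<subseteq> U
          \<and> (\<forall>z\<in>U. (Vt has_derivative (\<lambda>h. G z \<bullet> h)) (at z)) \<and> continuous_on U G
          \<and> classK \<alpha>1 \<and> classK \<alpha>2 \<and> \<epsilon> > 0
          \<and> (\<forall>z\<in>fst ` C. infdist z A \<le> \<epsilon> \<longrightarrow>
                \<alpha>1 (infdist z A) \<le> Vt z \<and> Vt z \<le> \<alpha>2 (infdist z A))
          \<and> (\<forall>z w. (z, w) \<in> C \<and> infdist z A \<le> \<epsilon> \<longrightarrow> G z \<bullet> f (z, w) \<ge> lam * Vt z))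
       \<or> (\<exists>(\<sigma> :: real \<Rightarrow> real) (\<epsilon>::real).
            continuous_on {0<..} \<sigma> \<and> (\<forall>s>0. \<sigma> s \<ge> 0) \<and> \<epsilon> > 0
          \<and> (\<forall>z w. (z, w) \<in> C \<and> 0 < infdist z A \<and> infdist z A \<le> \<epsilon> \<longrightarrow>
                 norm (f (z, w)) \<le> \<sigma> (infdist z A)))"
  shows "\<exists>\<alpha>. classK \<alpha> \<and>
           (\<forall>E x u. feasible C f D g \<T> X E x u \<longrightarrow> P2 A \<alpha> E x \<or> P3 A \<alpha> E x \<or> P4 A \<alpha> E x)"
proof -
  from assms(8) show ?thesis
  proof (elim disjE exE conjE)
    fix Vt :: "'a \<Rightarrow> real" and G :: "'a \<Rightarrow> 'a" and U :: "'a set" and \<alpha>1 \<alpha>2 :: "real \<Rightarrow> real" and lam \<epsilon> :: real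
    assume "\<forall>z. Vt z \<ge> 0" "open U" "closure (fst ` C) \<subseteq> U"
      "\<forall>z\<in>U. (Vt has_derivative (\<lambda>h. G z \<bullet> h)) (at z)" "continuous_on U G"
      "classK \<alpha>1" "classK \<alpha>2" "\<epsilon> > 0"
      "\<forall>z\<in>fst ` C. infdist z A \<le> \<epsilon> \<longrightarrow> \<alpha>1 (infdist z A) \<le> Vt z \<and> Vt z \<le> \<alpha>2 (infdist z A)"
      "\<forall>z w. (z, w) \<in> C \<and> infdist z A \<le> \<epsilon> \<longrightarrow> G z \<bullet> f (z, w) \<ge> lam * Vt z"
    then show ?thesis by (rule case_i)
  next
    fix \<sigma> :: "real \<Rightarrow> real" and \<epsilon> :: real
    assume "continuous_on {0<..} \<sigma>" "\<forall>s>0. \<sigma> s \<ge> 0" "\<epsilon> > 0"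
      "\<forall>z w. (z, w) \<in> C \<and> 0 < infdist z A \<and> infdist z A \<le> \<epsilon> \<longrightarrow> norm (f (z, w)) \<le> \<sigma> (infdist z A)"
    then show ?thesis by (rule case_ii)
  qed
qed

end
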